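(* Let $\{\mathcal X^\varepsilon\}$ be a $C^m$-Markov perturbation ($m\ge1$) of a synchronized DRN $\mathcal X^0$, and assume $\mu(\Omega^{(\ell-1)}\setminus\Omega^{(\ell)})>0$ for some $1\le\ell\le m$. Then for every $0<\delta<\mu(\Omega^{(\ell-1)}\setminus\Omega^{(\ell)})$ there exist $\varepsilon_\delta>0$, $c_\delta>0$ and $F_\delta:\Omega\to2^{\mathbb N}$ such that for $\mu$-a.e. $\omega\in\Omega$: (i) $\liminf_{n\to\infty}\frac{\#(F_\delta(\omega)\cap\{1,\dots,n\})}{n}>\mu(\Omega^{(\ell-1)}\setminus\Omega^{(\ell)})-\delta$; (ii) for any $0\le\varepsilon<\varepsilon_\delta$ and any two independent copies $\mathcal X,\mathcal Y$ of $\mathcal X^\varepsilon$ started in the fibre $S\times\{\omega\}$, $\mathbb P\{X_n\ne Y_n\mid X_0,Y_0\in S\times\{\omega\}\}\ge\varepsilon^\ell c_\delta$ for all $n\in F_\delta(\omega)$.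
   Context: Let $k\ge2$, $S=\{s_1,\dots,s_k\}$, $\mathbb K=\{1,\dots,k\}$, $e_1,\dots,e_k$ the canonical basis of $\mathbb R^k$; $|\cdot|$ is the $\ell^1$-norm and induced matrix norm; $\Sigma_1^+=\{v\in\mathbb R^k:v_j\ge0,\sum_jv_j=1\}$. $\Theta=(\Omega,\mathcal F,\mu,\theta)$ is an invertible metric dynamical system (standard probability space, $\theta$ invertible, ergodic, $\mu$-preserving). A Markov random network (MRN) over $\Theta$ is a process $(X_n)$ on $S\times\Omega$ with fibrewise measurable, stochastic, Markov transition probabilities; its transition cocycle $P_{\mathcal X}(n,\omega)=(\mathbb P\{X_n=(s_i,\theta^n\omega)\mid X_0=(s_j,\omega)\})_{i,j}$ is column-stochastic, $P_{\mathcal X}(0,\omega)=I_k$, $P_{\mathcal X}(m+n,\omega)=P_{\mathcal X}(m,\theta^n\omega)P_{\mathcal X}(n,\omega)$ for $\mu$-a.e. $\omega$. A DRN is an MRN $\mathcal X^0$ with cocycle $P^0$ having entries in $\{0,1\}$; it is synchronized if there is a measurable $N:\Omega\to\mathbb N$ such that, $\mu$-a.e., all columns of $P^0(n,\omega)$ coincide for $n\ge N(\omega)$. For a synchronized DRN there are $\mathcal F$-measurable $J:\Omega\to\mathbb K$ (synchronization index) and $N^-:\Omega\to\mathbb N$ (a pull-back synchronization time) with $P^0(n,\omega)e_{J(\omega)}=e_{J(\theta^n\omega)}$ for all $n$, and $P^0(n,\theta^{-n}\omega)e_j=e_{J(\omega)}$ for all $j$ and $n\ge N^-(\omega)$, $\mu$-a.e.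 $\omega$. A Markov perturbation of $\mathcal X^0$ is a family $\{\mathcal X^\varepsilon:\varepsilon\ge0\}$ of MRNs with $\mathcal X^\varepsilon=\mathcal X^0$ at $\varepsilon=0$ and $|P_{\mathcal X^\varepsilon}(1,\omega)-P^0(1,\omega)|\le\varepsilon$ for all $\varepsilon$, $\mu$-a.e. $\omega$; it is $C^m$ if for some $\varepsilon_0>0$ and $\mu$-a.e. $\omega$, $\varepsilon\mapsto P_{\mathcal X^\varepsilon}(1,\omega)$ is $C^m$ on $[0,\varepsilon_0]$. Let $P^{(\ell)}(n,\omega)=\frac{d^\ell}{d\varepsilon^\ell}P_{\mathcal X^\varepsilon}(n,\omega)|_{\varepsilon=0}$, $q^{(0)}(\omega)=e_{J(\omega)}$, and for $1\le\ell\le m$, with $\omega^-=\theta^{-N^-(\omega)}\omega$, $q^{(\ell)}(\omega)=\sum_{i=0}^{\ell-1}\binom{\ell}{i}P^{(\ell-i)}(N^-(\omega),\omega^-)q^{(i)}(\omega^-)$. Let $\Omega^{(0)}=\Omega$ and $\Omega^{(\ell)}=\{q^{(1)}=0\}\cap\dots\cap\{q^{(\ell)}=0\}$. Two independent copies $\mathcal X,\mathcal Y$ of $\mathcal X^\varepsilon$ started in the fibre $S\times\{\omega\}$ are independent processes with cocycle $P_{\mathcal X^\varepsilon}$ and arbitrary initial distributions $u,v\in\Sigma_1^+$ on $S\times\{\omega\}$; thus $\mathbb P\{X_n\ne Y_n\mid X_0,Y_0\in S\times\{\omega\}\}=1-\sum_i(P_{\mathcal X^\varepsilon}(n,\omega)u)_i(P_{\mathcal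 X^\varepsilon}(n,\omega)v)_i$. *)

theory Defs
  imports "HOL-Probability.Probability"
begin

definition invertible_mds :: "'a measure \<Rightarrow> ('a \<Rightarrow> 'a) \<Rightarrow> ('a \<Rightarrow> 'a) \<Rightarrow> bool" where
  "invertible_mds M \<theta> \<theta>i \<longleftrightarrow>
     prob_space M \<and>
     \<theta> \<in> M \<rightarrow>\<^sub>M M \<and> \<theta>i \<in> M \<rightarrow>\<^sub>M M \<and>
     (\<forall>x\<in>space M. \<theta>i (\<theta> x) = x \<and> \<theta> (\<theta>i x) = x) \<and>
     distr M M \<theta> = M \<and>
     (\<forall>A\<in>sets M. \<theta> -` A \<inter> space M = A \<longrightarrow> measure M A = 0 \<or> measure M A = 1)"

type_synonym 'k mat = "real ^'k ^'k"

definition e_vec :: "'k::finite \<Rightarrow> real ^'k" where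
  "e_vec j = axis j 1"

text \<open>Induced l1 matrix norm (maximal absolute column sum).\<close>
definition mnorm1 :: "'k::finite mat \<Rightarrow> real" where
  "mnorm1 P = Max (range (\<lambda>j. \<Sum>i\<in>UNIV. \<bar>P $ i $ j\<bar>))"

definition col_stochastic :: "'k::finite mat \<Rightarrow> bool" where
  "col_stochastic P \<longleftrightarrow> (\<forall>i j. P $ i $ j \<ge> 0) \<and> (\<forall>j. (\<Sum>i\<in>UNIV. P $ i $ j) = 1)"

definition simplex1 :: "(real ^'k::finite) set" where
  "simplex1 = {v. (\<forall>j. v $ j \<ge> 0) \<and> (\<Sum>j\<in>UNIV. v $ j) = 1}"

primrec cocycle :: "('a \<Rightarrow> 'k::finite mat) \<Rightarrow> ('a \<Rightarrow> 'a) \<Rightarrow> nat \<Rightarrow> 'a \<Rightarrow> 'k mat" where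
  "cocycle A \<theta> 0 \<omega> = mat 1"
| "cocycle A \<theta> (Suc n) \<omega> = A ((\<theta> ^^ n) \<omega>) ** cocycle A \<theta> n \<omega>"

definition MRN :: "'a measure \<Rightarrow> ('a \<Rightarrow> 'k::finite mat) \<Rightarrow> bool" where
  "MRN M A \<longleftrightarrow> (\<forall>i j. (\<lambda>\<omega>. A \<omega> $ i $ j) \<in> borel_measurable M) \<and>
                (AE \<omega> in M. col_stochastic (A \<omega>))"

definition DRN :: "'a measure \<Rightarrow> ('a \<Rightarrow> 'k::finite mat) \<Rightarrow> bool" where
  "DRN M A \<longleftrightarrow> MRN M A \<and> (AE \<omega> in M. \<forall>i j. A \<omega> $ i $ j \<in> {0, 1})"

definition synchronized :: "'a measure \<Rightarrow> ('a \<Rightarrow> 'a) \<Rightarrow> ('a \<Rightarrow> 'k::finite mat) \<Rightarrow> bool" where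
  "synchronized M \<theta> A \<longleftrightarrow> DRN M A \<and>
     (\<exists>N::'a \<Rightarrow> nat. N \<in> M \<rightarrow>\<^sub>M count_space UNIV \<and>
        (AE \<omega> in M. \<forall>n\<ge>N \<omega>. \<forall>i j j'. cocycle A \<theta> n \<omega> $ i $ j = cocycle A \<theta> n \<omega> $ i $ j'))"

definition Cm_on :: "nat \<Rightarrow> (real \<Rightarrow> 'v::real_normed_vector) \<Rightarrow> real set \<Rightarrow> bool" where
  "Cm_on m f S \<longleftrightarrow> (\<exists>D. (\<forall>x\<in>S. D 0 x = f x) \<and>
      (\<forall>i<m. \<forall>x\<in>S. (D i has_vector_derivative D (Suc i) x) (at x within S)) \<and>
      continuous_on S (D m))"

primrec hder :: "nat \<Rightarrow> (real \<Rightarrow> 'v::real_normed_vector) \<Rightarrow> real \<Rightarrow> 'v" where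
  "hder 0 f = f"
| "hder (Suc i) f = (\<lambda>x. vector_derivative (hder i f) (at x within {0..}))"

text \<open>Markov perturbation: A e is the one-step matrix of X^e.\<close>
definition markov_perturbation :: "'a measure \<Rightarrow> (real \<Rightarrow> 'a \<Rightarrow> 'k::finite mat) \<Rightarrow> bool" where
  "markov_perturbation M A \<longleftrightarrow>
     (\<forall>\<epsilon>\<ge>0. MRN M (A \<epsilon>) \<and> (AE \<omega> in M. mnorm1 (A \<epsilon> \<omega> - A 0 \<omega>) \<le> \<epsilon>))"

definition Cm_markov_perturbation :: "nat \<Rightarrow> 'a measure \<Rightarrow> (real \<Rightarrow> 'a \<Rightarrow> 'k::finite mat) \<Rightarrow> bool" where
  "Cm_markov_perturbation m M A \<longleftrightarrow> markov_perturbation M A \<and>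
     (\<exists>\<epsilon>0>0. AE \<omega> in M. Cm_on m (\<lambda>\<epsilon>. A \<epsilon> \<omega>) {0..\<epsilon>0})"

definition Pder :: "(real \<Rightarrow> 'a \<Rightarrow> 'k::finite mat) \<Rightarrow> ('a \<Rightarrow> 'a) \<Rightarrow> nat \<Rightarrow> nat \<Rightarrow> 'a \<Rightarrow> 'k mat" where
  "Pder A \<theta> l n \<omega> = hder l (\<lambda>\<epsilon>. cocycle (A \<epsilon>) \<theta> n \<omega>) 0"

text \<open>q^(l) (with J the synchronization index, Nm the pull-back synchronization time, \<theta>i = inverse of \<theta>).\<close>
fun qvec :: "(real \<Rightarrow> 'a \<Rightarrow> 'k::finite mat) \<Rightarrow> ('a \<Rightarrow> 'a) \<Rightarrow> ('a \<Rightarrow> 'a) \<Rightarrow> ('a \<Rightarrow> 'k) \<Rightarrow> ('a \<Rightarrow> nat)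
               \<Rightarrow> nat \<Rightarrow> 'a \<Rightarrow> real ^'k" where
  "qvec A \<theta> \<theta>i J Nm l \<omega> =
     (if l = 0 then e_vec (J \<omega>)
      else (let \<omega>m = (\<theta>i ^^ Nm \<omega>) \<omega> in
            \<Sum>i<l. of_nat (l choose i) *\<^sub>R (Pder A \<theta> (l - i) (Nm \<omega>) \<omega>m *v qvec A \<theta> \<theta>i J Nm i \<omega>m)))"

definition Omega_l :: "'a measure \<Rightarrow> (real \<Rightarrow> 'a \<Rightarrow> 'k::finite mat) \<Rightarrow> ('a \<Rightarrow> 'a) \<Rightarrow> ('a \<Rightarrow> 'a) \<Rightarrow> ('a \<Rightarrow> 'k)
                     \<Rightarrow> ('a \<Rightarrow> nat) \<Rightarrow> nat \<Rightarrow> 'a set" where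
  "Omega_l M A \<theta> \<theta>i J Nm l = {\<omega>\<in>space M. \<forall>j\<in>{1..l}. qvec A \<theta> \<theta>i J Nm j \<omega> = 0}"

end

theory Submission
  imports Defs
begin


lemma bb_mm: "bounded_bilinear (\<lambda>(A::real^'n^'m) (B::real^'p^'n). A ** B)"
proof -
  have "bilinear (\<lambda>(A::real^'n^'m) (B::real^'p^'n). A ** B)"
    unfolding bilinear_def
    by (auto simp: linear_iff vec_eq_iff matrix_matrix_mult_def sum.distrib sum_distrib_left algebra_simps)
  thus ?thesis using bilinear_conv_bounded_bilinear by blast
qed

lemma pascal_sum:
  fixes f :: "nat \<Rightarrow> nat \<Rightarrow> 'a::real_vector"
  shows "(\<Sum>s\<le>t. real (t choose s) *\<^sub>R (f (Suc t - s) s + f (t - s) (Suc s)))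
       = (\<Sum>s\<le>Suc t. real (Suc t choose s) *\<^sub>R f (Suc t - s) s)"
proof -
  have A: "(\<Sum>s\<le>t. real (t choose s) *\<^sub>R f (Suc t - s) s)
         = f (Suc t) 0 + (\<Sum>s\<le>t. real (t choose Suc s) *\<^sub>R f (t - s) (Suc s))"
  proof -
    have "(\<Sum>s\<le>Suc t. real (t choose s) *\<^sub>R f (Suc t - s) s)
        = f (Suc t) 0 + (\<Sum>s\<le>t. real (t choose Suc s) *\<^sub>R f (Suc t - Suc s) (Suc s))"
      by (subst sum.atMost_Suc_shift) simp
    moreover have "(\<Sum>s\<le>Suc t. real (t choose s) *\<^sub>R f (Suc t - s) s) = (\<Sum>s\<le>t. real (t choose s) *\<^sub>R f (Suc t - s) s)"
      by simp
    ultimately show ?thesis by simp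
  qed
  have B: "(\<Sum>s\<le>Suc t. real (Suc t choose s) *\<^sub>R f (Suc t - s) s)
      = f (Suc t) 0 + (\<Sum>s\<le>t. real (Suc t choose Suc s) *\<^sub>R f (t - s) (Suc s))"
    by (subst sum.atMost_Suc_shift) simp
  show ?thesis
    unfolding B scaleR_right_distrib sum.distrib A
    by (simp add: sum.distrib algebra_simps)
qed

definition CmW :: "nat \<Rightarrow> (nat \<Rightarrow> real \<Rightarrow> 'v::real_normed_vector) \<Rightarrow> real set \<Rightarrow> bool" where
  "CmW m D S \<longleftrightarrow> (\<forall>i<m. \<forall>x\<in>S. (D i has_vector_derivative D (Suc i) x) (at x within S)) \<and> continuous_on S (D m)"

lemma Cm_onE:
  assumes "Cm_on m f S"
  obtains D where "\<And>x. x \<in> S \<Longrightarrow> D 0 x = f x" "CmW m D S"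
  using assms unfolding Cm_on_def CmW_def by blast

lemma CmW_cont:
  assumes "CmW m D S" "k \<le> m"
  shows "continuous_on S (D k)"
proof (cases "k = m")
  case True thus ?thesis using assms by (simp add: CmW_def)
next
  case False
  hence "k < m" using assms by simp
  hence "\<forall>x\<in>S. (D k has_vector_derivative D (Suc k) x) (at x within S)" using assms by (simp add: CmW_def)
  thus ?thesis
    by (meson continuous_on_eq_continuous_within has_vector_derivative_continuous)
qed

lemma CmW_mono:
  assumes "CmW m D S" "k \<le> m"
  shows "CmW k D S"
  using assms CmW_cont[OF assms] unfolding CmW_def by auto

lemma CmW_const: "CmW m (\<lambda>t x. if t = 0 then c else 0) S"
  unfolding CmW_def by (auto intro!: has_vector_derivative_const continuous_intros)

definition prodD :: "(nat \<Rightarrow> real \<Rightarrow> real^'n^'m) \<Rightarrow> (nat \<Rightarrow> real \<Rightarrow> real^'p^'n) \<Rightarrow> nat \<Rightarrow> real \<Rightarrow> real^'p^'m" where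
  "prodD Df Dg t x = (\<Sum>s\<le>t. real (t choose s) *\<^sub>R (Df (t - s) x ** Dg s x))"

lemma prodD_0: "prodD Df Dg 0 x = Df 0 x ** Dg 0 x"
  by (simp add: prodD_def)

lemma CmW_mult:
  assumes f: "CmW m Df S" and g: "CmW m Dg S"
  shows "CmW m (prodD Df Dg) S"
  unfolding CmW_def
proof safe
  interpret bb: bounded_bilinear "\<lambda>(A::real^'n^'m) (B::real^'p^'n). A ** B" by (rule bb_mm)
  fix i x assume i: "i < m" and x: "x \<in> S"
  have "((\<lambda>x. \<Sum>s\<le>i. real (i choose s) *\<^sub>R (Df (i - s) x ** Dg s x)) has_vector_derivative
     (\<Sum>s\<le>i. real (i choose s) *\<^sub>R (Df (i - s) x ** Dg (Suc s) x + Df (Suc (i - s)) x ** Dg s x))) (at x within S)"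
  proof (rule has_vector_derivative_sum)
    fix s assume "s \<in> {..i}"
    then have "(Df (i - s) has_vector_derivative Df (Suc (i - s)) x) (at x within S)"
      "(Dg s has_vector_derivative Dg (Suc s) x) (at x within S)"
      using f g i x unfolding CmW_def by auto
    from bb.has_vector_derivative[OF this]
    show "((\<lambda>x. real (i choose s) *\<^sub>R (Df (i - s) x ** Dg s x)) has_vector_derivative
       real (i choose s) *\<^sub>R (Df (i - s) x ** Dg (Suc s) x + Df (Suc (i - s)) x ** Dg s x)) (at x within S)"
      by (rule bounded_linear.has_vector_derivative[OF bounded_linear_scaleR_right])
  qed
  moreover have "(\<Sum>s\<le>i. real (i choose s) *\<^sub>R (Df (i - s) x ** Dg (Suc s) x + Df (Suc (i - s)) x ** Dg s x))
     = prodD Df Dg (Suc i) x"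
    unfolding prodD_def
    using pascal_sum[of i "\<lambda>a b. Df a x ** Dg b x"]
    by (simp add: Suc_diff_le add.commute)
  ultimately show "(prodD Df Dg i has_vector_derivative prodD Df Dg (Suc i) x) (at x within S)"
    unfolding prodD_def[abs_def] by simp
next
  interpret bb: bounded_bilinear "\<lambda>(A::real^'n^'m) (B::real^'p^'n). A ** B" by (rule bb_mm)
  have "\<And>k. k \<le> m \<Longrightarrow> continuous_on S (Df k)" "\<And>k. k \<le> m \<Longrightarrow> continuous_on S (Dg k)"
    using CmW_cont f g by blast+
  then show "continuous_on S (prodD Df Dg m)"
    unfolding prodD_def[abs_def]
    by (auto intro!: continuous_intros bb.continuous_on)
qed


lemma at_within_Ici_Icc:
  fixes x e :: real
  assumes "0 \<le> x" "x < e"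
  shows "at x within {0..} = at x within {0..e}"
  by (rule at_within_nhd[where S="{..<e}"]) (use assms in auto)

lemma at_within_Icc_nonbot:
  fixes x e :: real
  assumes "0 \<le> x" "x < e"
  shows "at x within {0..e} \<noteq> bot"
proof -
  have "x islimpt {0..e}"
    using assms by (subst islimpt_Icc) auto
  thus ?thesis using trivial_limit_within by blast
qed

lemma hder_eq:
  assumes D: "CmW m D {0..e}" and e: "e > 0" and f: "\<And>x. x \<in> {0..e} \<Longrightarrow> D 0 x = f x"
    and k: "k \<le> m"
  shows "\<And>x. 0 \<le> x \<Longrightarrow> x < e \<Longrightarrow> hder k f x = D k x"
  using k
proof (induction k)
  case 0 thus ?case using f by simp
next
  case (Suc k)
  have "(D k has_vector_derivative D (Suc k) x) (at x within {0..e})"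
    using D Suc.prems unfolding CmW_def by auto
  hence d1: "(D k has_vector_derivative D (Suc k) x) (at x within {0..})"
    using at_within_Ici_Icc[OF Suc.prems(1,2)] by simp
  have d2: "(hder k f has_vector_derivative D (Suc k) x) (at x within {0..})"
  proof (rule has_vector_derivative_transform_within[OF d1, of "e - x"])
    show "0 < e - x" "x \<in> {0..}" using Suc.prems by auto
    fix x' assume "x' \<in> {0..}" "dist x' x < e - x"
    thus "D k x' = hder k f x'" using Suc.IH[of x'] Suc.prems by (auto simp: dist_real_def)
  qed
  have nb: "at x within {0..} \<noteq> bot"
    using at_within_Ici_Icc[OF Suc.prems(1,2)] at_within_Icc_nonbot[OF Suc.prems(1,2)] by simp
  show ?case using vector_derivative_within[OF nb d2] by simp
qed


lemma CmW_shift: "CmW (Suc i) D S \<Longrightarrow> CmW i (\<lambda>k. D (Suc k)) S"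
  unfolding CmW_def by auto

lemma taylor_poly_deriv:
  "((\<lambda>t. \<Sum>k\<le>Suc i. (t ^ k / fact k) *\<^sub>R (c k :: 'v::real_normed_vector)) has_vector_derivative
      (\<Sum>k\<le>i. (t ^ k / fact k) *\<^sub>R c (Suc k))) (at t within S)"
proof -
  have "((\<lambda>t. \<Sum>k\<le>Suc i. (t ^ k / fact k) *\<^sub>R c k) has_vector_derivative
      (\<Sum>k\<le>Suc i. (if k = 0 then 0 else (t ^ (k - 1) / fact (k - 1))) *\<^sub>R c k)) (at t within S)"
  proof (rule has_vector_derivative_sum)
    fix k assume "k \<in> {..Suc i}"
    have "((\<lambda>t. t ^ k / fact k) has_real_derivative (if k = 0 then 0 else (t ^ (k - 1) / fact (k - 1)))) (at t within S)"
    proof (cases k)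
      case 0 thus ?thesis by simp
    next
      case (Suc j)
      have "((\<lambda>t. t ^ k / fact k) has_real_derivative (real k * t ^ (k - 1)) / fact k) (at t within S)"
        by (auto intro!: derivative_eq_intros)
      moreover have "(real k * t ^ (k - 1)) / fact k = t ^ (k - 1) / fact (k - 1)"
      proof -
        have "fact k = real k * fact (k - 1)" using Suc by (simp add: fact_Suc)
        thus ?thesis using Suc by simp
      qed
      ultimately show ?thesis using Suc by simp
    qed
    thus "((\<lambda>t. (t ^ k / fact k) *\<^sub>R c k) has_vector_derivative (if k = 0 then 0 else t ^ (k - 1) / fact (k - 1)) *\<^sub>R c k) (at t within S)"
      by (rule has_vector_derivative_scaleR[of _ _ _ _ "\<lambda>_. c k", OF _ has_vector_derivative_const, simplified])
  qed
  moreover have "(\<Sum>k\<le>Suc i. (if k = 0 then 0 else (t ^ (k - 1) / fact (k - 1))) *\<^sub>R c k)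
     = (\<Sum>k\<le>i. (t ^ k / fact k) *\<^sub>R c (Suc k))"
    by (subst sum.atMost_Suc_shift) simp
  ultimately show ?thesis by simp
qed

lemma taylor_peano:
  fixes D :: "nat \<Rightarrow> real \<Rightarrow> 'v::real_normed_vector"
  assumes "CmW i D {0..e}" "e > 0" "\<eta> > 0"
  shows "\<exists>d>0. \<forall>x. 0 < x \<and> x < d \<longrightarrow> norm (D 0 x - (\<Sum>k\<le>i. (x ^ k / fact k) *\<^sub>R D k 0)) \<le> \<eta> * x ^ i"
  using assms
proof (induction i arbitrary: D \<eta>)
  case 0
  have "continuous_on {0..e} (D 0)" using 0 by (simp add: CmW_def)
  hence "continuous (at 0 within {0..e}) (D 0)"
    using 0 by (simp add: continuous_on_eq_continuous_within)
  then obtain d where d: "d > 0" "\<And>x. x \<in> {0..e} \<Longrightarrow> dist x 0 < d \<Longrightarrow> dist (D 0 x) (D 0 0) < \<eta>"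
    using 0 unfolding continuous_within_eps_delta by blast
  show ?case
  proof (intro exI[of _ "min d e"] conjI allI impI)
    show "min d e > 0" using d 0 by simp
    fix x assume "0 < x \<and> x < min d e"
    thus "norm (D 0 x - (\<Sum>k\<le>0. (x ^ k / fact k) *\<^sub>R D k 0)) \<le> \<eta> * x ^ 0"
      using d(2)[of x] by (simp add: dist_norm)
  qed
next
  case (Suc i)
  obtain d where d: "d > 0" "\<And>x. 0 < x \<and> x < d \<Longrightarrow>
      norm (D 1 x - (\<Sum>k\<le>i. (x ^ k / fact k) *\<^sub>R D (Suc k) 0)) \<le> \<eta> * x ^ i"
    using Suc.IH[OF CmW_shift[OF Suc.prems(1)] Suc.prems(2,3)] by auto
  define g where "g t = D 0 t - (\<Sum>k\<le>Suc i. (t ^ k / fact k) *\<^sub>R D k 0)" for t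
  define g' where "g' t = D 1 t - (\<Sum>k\<le>i. (t ^ k / fact k) *\<^sub>R D (Suc k) 0)" for t
  have dg: "(g has_vector_derivative g' t) (at t within {0..e})" if "t \<in> {0..e}" for t
    unfolding g_def g'_def
    using Suc.prems(1) that
    by (intro has_vector_derivative_diff taylor_poly_deriv) (auto simp: CmW_def)
  have g'0: "g' 0 = 0"
    by (simp add: g'_def sum.atMost_shift zero_power)
  have g0: "g 0 = 0"
    by (simp add: g_def sum.atMost_shift zero_power)
  show ?case
  proof (intro exI[of _ "min d e"] conjI allI impI)
    show "min d e > 0" using d Suc by simp
    fix x assume x: "0 < x \<and> x < min d e"
    have B: "norm (g' t - g' 0) \<le> \<eta> * x ^ i" if "t \<in> {0..x}" for t
    proof (cases "t = 0")
      case True thus ?thesis using Suc.prems(3) x by (simp add: g'0)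
    next
      case False
      hence "norm (g' t) \<le> \<eta> * t ^ i" using d(2)[of t] that x by (simp add: g'_def)
      also have "\<dots> \<le> \<eta> * x ^ i" using that Suc.prems(3) False
        by (intro mult_left_mono power_mono) auto
      finally show ?thesis by (simp add: g'0)
    qed
    have "norm (g x - g 0 - (x - 0) *\<^sub>R g' 0) \<le> norm (x - 0) * (\<eta> * x ^ i)"
    proof (rule vector_differentiable_bound_linearization[where S="{0..x}"])
      show "\<And>t. t \<in> {0..x} \<Longrightarrow> (g has_vector_derivative g' t) (at t within {0..x})"
        using dg x by (meson atLeastAtMost_iff has_vector_derivative_within_subset order.strict_trans1 less_imp_le min_less_iff_conj subset_iff)
      show "closed_segment 0 x \<subseteq> {0..x}" using x by (simp add: closed_segment_real_eq)
    qed (use B x in auto)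
    hence "norm (g x) \<le> \<eta> * x ^ Suc i"
      using x by (simp add: g0 g'0 algebra_simps)
    thus "norm (D 0 x - (\<Sum>k\<le>Suc i. (x ^ k / fact k) *\<^sub>R D k 0)) \<le> \<eta> * x ^ Suc i"
      by (simp add: g_def)
  qed
qed


lemma CmW_lin_const:
  fixes L :: "'v::real_normed_vector \<Rightarrow> 'w::real_normed_vector"
  assumes D: "CmW m D {0..e}" and e: "e > 0" and L: "bounded_linear L"
    and c: "\<And>x. x \<in> {0..e} \<Longrightarrow> L (D 0 x) = c"
  shows "t \<le> m \<Longrightarrow> x \<in> {0..e} \<Longrightarrow> L (D t x) = (if t = 0 then c else 0)"
proof (induction t arbitrary: x)
  case 0 thus ?case using c by simp
next
  case (Suc t)
  have d1: "((\<lambda>y. L (D t y)) has_vector_derivative L (D (Suc t) x)) (at x within {0..e})"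
    using D Suc.prems unfolding CmW_def
    by (intro bounded_linear.has_vector_derivative[OF L]) auto
  have d2: "((\<lambda>y. L (D t y)) has_vector_derivative 0) (at x within {0..e})"
  proof (rule has_vector_derivative_transform_within[OF has_vector_derivative_const, of 1])
    show "x \<in> {0..e}" using Suc.prems by simp
    fix x' assume "x' \<in> {0..e}" "dist x' x < 1"
    thus "(if t = 0 then c else 0) = L (D t x')" using Suc.IH[of x'] Suc.prems by simp
  qed simp
  have "L (D (Suc t) x) = 0"
    using vector_derivative_unique_within_closed_interval[of 0 e x _ "L (D (Suc t) x)" 0] d1 d2 e Suc.prems
    by (simp add: cbox_interval)
  thus ?case by simp
qed

lemma Cm_on_const: "Cm_on m (\<lambda>x. c) S"
  unfolding Cm_on_def using CmW_const[of m c S] unfolding CmW_def by (intro exI[of _ "\<lambda>t x. if t = 0 then c else 0"]) auto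

lemma Cm_on_mult:
  fixes f :: "real \<Rightarrow> real^'n^'m" and g :: "real \<Rightarrow> real^'p^'n"
  assumes "Cm_on m f S" "Cm_on m g S"
  shows "Cm_on m (\<lambda>x. f x ** g x) S"
proof -
  obtain Df where f: "\<And>x. x \<in> S \<Longrightarrow> Df 0 x = f x" "CmW m Df S" using Cm_onE[OF assms(1)] by metis
  obtain Dg where g: "\<And>x. x \<in> S \<Longrightarrow> Dg 0 x = g x" "CmW m Dg S" using Cm_onE[OF assms(2)] by metis
  show ?thesis unfolding Cm_on_def
    using CmW_mult[OF f(2) g(2)] f(1) g(1)
    by (intro exI[of _ "prodD Df Dg"]) (auto simp: prodD_0 CmW_def)
qed

lemma hder_mult:
  fixes f :: "real \<Rightarrow> real^'n^'m" and g :: "real \<Rightarrow> real^'p^'n"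
  assumes "Cm_on m f {0..e}" "Cm_on m g {0..e}" "e > 0" "t \<le> m"
  shows "hder t (\<lambda>x. f x ** g x) 0 = (\<Sum>s\<le>t. real (t choose s) *\<^sub>R (hder (t - s) f 0 ** hder s g 0))"
proof -
  obtain Df where f: "\<And>x. x \<in> {0..e} \<Longrightarrow> Df 0 x = f x" "CmW m Df {0..e}" using Cm_onE[OF assms(1)] by metis
  obtain Dg where g: "\<And>x. x \<in> {0..e} \<Longrightarrow> Dg 0 x = g x" "CmW m Dg {0..e}" using Cm_onE[OF assms(2)] by metis
  have p: "CmW m (prodD Df Dg) {0..e}" "\<And>x. x \<in> {0..e} \<Longrightarrow> prodD Df Dg 0 x = f x ** g x"
    using CmW_mult[OF f(2) g(2)] f(1) g(1) by (auto simp: prodD_0)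
  have "hder t (\<lambda>x. f x ** g x) 0 = prodD Df Dg t 0"
    using hder_eq[OF p(1) assms(3) p(2) assms(4)] assms(3) by simp
  also have "\<dots> = (\<Sum>s\<le>t. real (t choose s) *\<^sub>R (hder (t - s) f 0 ** hder s g 0))"
    unfolding prodD_def
    using hder_eq[OF f(2) assms(3) f(1)] hder_eq[OF g(2) assms(3) g(1)] assms(3,4)
    by (intro sum.cong refl) auto
  finally show ?thesis .
qed

lemma hder_lin_const:
  fixes L :: "'v::real_normed_vector \<Rightarrow> 'w::real_normed_vector"
  assumes "Cm_on m f {0..e}" "e > 0" "bounded_linear L" "\<And>x. x \<in> {0..e} \<Longrightarrow> L (f x) = c"
    "1 \<le> t" "t \<le> m"
  shows "L (hder t f 0) = 0"
proof -
  obtain D where D: "\<And>x. x \<in> {0..e} \<Longrightarrow> D 0 x = f x" "CmW m D {0..e}" using Cm_onE[OF assms(1)] by metis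
  have "L (D t 0) = 0"
    using CmW_lin_const[OF D(2) assms(2,3), of c t 0] assms D(1) by simp
  thus ?thesis using hder_eq[OF D(2) assms(2) D(1) assms(6), of 0] assms(2) by simp
qed

lemma taylor_hder:
  fixes f :: "real \<Rightarrow> 'v::real_normed_vector"
  assumes "Cm_on m f {0..e}" "e > 0" "i \<le> m" "\<eta> > 0"
  shows "\<exists>d>0. \<forall>x. 0 < x \<and> x < d \<longrightarrow> norm (f x - (\<Sum>k\<le>i. (x ^ k / fact k) *\<^sub>R hder k f 0)) \<le> \<eta> * x ^ i"
proof -
  obtain D where D: "\<And>x. x \<in> {0..e} \<Longrightarrow> D 0 x = f x" "CmW m D {0..e}" using Cm_onE[OF assms(1)] by metis
  obtain d where d: "d > 0" "\<And>x. 0 < x \<and> x < d \<Longrightarrow> norm (D 0 x - (\<Sum>k\<le>i. (x ^ k / fact k) *\<^sub>R D k 0)) \<le> \<eta> * x ^ i"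
    using taylor_peano[OF CmW_mono[OF D(2) assms(3)] assms(2,4)] by blast
  have h: "hder k f 0 = D k 0" if "k \<le> i" for k
    using hder_eq[OF D(2) assms(2) D(1), of k 0] that assms(2,3) by simp
  show ?thesis
  proof (intro exI[of _ "min d e"] conjI allI impI)
    show "min d e > 0" using d assms by simp
    fix x assume x: "0 < x \<and> x < min d e"
    thus "norm (f x - (\<Sum>k\<le>i. (x ^ k / fact k) *\<^sub>R hder k f 0)) \<le> \<eta> * x ^ i"
      using d(2)[of x] D(1)[of x] h by simp
  qed
qed




lemma measurable_funpow: "f \<in> M \<rightarrow>\<^sub>M M \<Longrightarrow> (f ^^ n) \<in> M \<rightarrow>\<^sub>M M"
  by (induction n) auto

lemma distr_funpow:
  assumes "f \<in> M \<rightarrow>\<^sub>M M" "distr M M f = M"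
  shows "distr M M (f ^^ n) = M"
proof (induction n)
  case 0 thus ?case by simp
next
  case (Suc n)
  have "distr (distr M M (f ^^ n)) M f = distr M M (f \<circ> (f ^^ n))"
    using assms measurable_funpow[OF assms(1)] by (intro distr_distr) auto
  hence "distr M M (f \<circ> (f ^^ n)) = M" using Suc assms by simp
  thus ?case by (simp add: comp_def)
qed

lemma integral_indicator_funpow:
  assumes "f \<in> M \<rightarrow>\<^sub>M M" "distr M M f = M" "G \<in> sets M"
  shows "integral\<^sup>L M (\<lambda>x. indicator G ((f ^^ n) x) :: real) = measure M G"
proof -
  have "integral\<^sup>L M (\<lambda>x. indicator G ((f ^^ n) x) :: real) = integral\<^sup>L (distr M M (f ^^ n)) (indicator G)"
    using assms measurable_funpow[OF assms(1)] by (subst integral_distr) auto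
  also have "\<dots> = measure M G" using distr_funpow[OF assms(1,2)] assms by simp
  finally show ?thesis .
qed

definition Scount :: "('a \<Rightarrow> 'a) \<Rightarrow> 'a set \<Rightarrow> nat \<Rightarrow> 'a \<Rightarrow> real" where
  "Scount f G n x = (\<Sum>j<n. indicator G ((f ^^ j) x))"

lemma Scount_add: "Scount f G (a + b) x = Scount f G a x + Scount f G b ((f ^^ a) x)"
proof (induction b)
  case 0 thus ?case by (simp add: Scount_def)
next
  case (Suc b)
  have "(f ^^ a) ((f ^^ b) x) = (f ^^ b) ((f ^^ a) x)" by (metis comp_apply funpow_add add.commute)
  thus ?case using Suc by (simp add: Scount_def funpow_add)
qed

lemma Scount_Suc: "Scount f G (Suc n) x = indicator G x + Scount f G n (f x)"
  using Scount_add[of f G 1 n x] by (simp add: Scount_def)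

lemma Scount_le: "Scount f G n x \<le> n"
proof -
  have "Scount f G n x \<le> (\<Sum>j<n. 1)" unfolding Scount_def by (intro sum_mono) (auto simp: indicator_def)
  thus ?thesis by simp
qed

lemma Scount_nonneg: "0 \<le> Scount f G n x"
  unfolding Scount_def by (intro sum_nonneg) auto

lemma tiling:
  fixes r :: real and f :: "'a \<Rightarrow> 'a" and K :: nat
  assumes r: "0 \<le> r"
    and B: "B = {x. \<not> (\<exists>t\<in>{1..K}. Scount f G t x \<le> r * t)}"
  shows "Scount f G N x \<le> r * N + Scount f B N x + K"
proof (induction N arbitrary: x rule: less_induct)
  case (less N)
  show ?case
  proof (cases "x \<in> B")
    case True
    show ?thesis
    proof (cases N)
      case 0 thus ?thesis by (simp add: Scount_def)
    next
      case (Suc N')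
      have IH: "Scount f G N' (f x) \<le> r * N' + Scount f B N' (f x) + K" using less Suc by simp
      have ind: "indicator G x \<le> (1::real)" by (simp add: indicator_def)
      have rle: "r * N' \<le> r * N" using Suc r by (intro mult_left_mono) auto
      have eq: "Scount f G N x = indicator G x + Scount f G N' (f x)" "Scount f B N x = 1 + Scount f B N' (f x)"
        using True Suc by (simp_all add: Scount_Suc)
      show ?thesis using IH ind rle eq by linarith
    qed
  next
    case False
    then obtain t where t: "t \<in> {1..K}" "Scount f G t x \<le> r * t" unfolding B by blast
    show ?thesis
    proof (cases "t \<le> N")
      case True
      have N: "N = t + (N - t)" using True by simp
      have IH: "Scount f G (N - t) ((f ^^ t) x) \<le> r * (N - t) + Scount f B (N - t) ((f ^^ t) x) + K"
        using less.IH[of "N - t" "(f ^^ t) x"] t True by (simp add: of_nat_diff)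
      have "Scount f B (N - t) ((f ^^ t) x) \<le> Scount f B t x + Scount f B (N - t) ((f ^^ t) x)"
        using Scount_nonneg by simp
      also have "\<dots> = Scount f B N x" using Scount_add[of f B t "N - t" x] N by simp
      finally have "Scount f B (N - t) ((f ^^ t) x) \<le> Scount f B N x" .
      moreover have "Scount f G N x = Scount f G t x + Scount f G (N - t) ((f ^^ t) x)"
        using Scount_add[of f G t "N - t" x] N by simp
      moreover have "r * t + r * (N - t) = r * N" using True by (simp add: algebra_simps of_nat_diff)
      ultimately show ?thesis using IH t by linarith
    next
      case False
      have "Scount f G N x \<le> K" using Scount_le[of f G N x] False t by simp
      thus ?thesis using Scount_nonneg[of f B N x] r by (simp add: add_increasing)
    qed
  qed
qed


lemma Scount_meas:
  assumes "f \<in> M \<rightarrow>\<^sub>M M" "G \<in> sets M"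
  shows "(\<lambda>x. Scount f G n x) \<in> borel_measurable M"
  unfolding Scount_def using measurable_funpow[OF assms(1)] assms(2)
  by (intro borel_measurable_sum borel_measurable_indicator' ) auto

lemma freq_lower:
  assumes P: "prob_space M" and f: "f \<in> M \<rightarrow>\<^sub>M M" "distr M M f = M"
    and erg: "\<forall>A\<in>sets M. f -` A \<inter> space M = A \<longrightarrow> measure M A = 0 \<or> measure M A = 1"
    and G: "G \<in> sets M" and r: "r < measure M G"
  shows "AE x in M. \<exists>N. \<forall>n\<ge>N. r * n \<le> Scount f G n x"
proof (cases "r \<le> 0")
  case True
  have "r * n \<le> Scount f G n x" for n x
    using Scount_nonneg[of f G n x] True by (meson mult_nonpos_nonneg of_nat_0_le_iff order_trans)
  thus ?thesis by auto
next
  case False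
  hence rpos: "r > 0" by simp
  interpret prob_space M by (rule P)
  have Sm[measurable]: "\<And>n H. H \<in> sets M \<Longrightarrow> (\<lambda>x. Scount f H n x) \<in> borel_measurable M"
    using Scount_meas[OF f(1)] by blast
  have fsp: "\<And>x. x \<in> space M \<Longrightarrow> f x \<in> space M" using f(1) by (simp add: measurable_space)
  define E where "E = {x\<in>space M. \<exists>c::nat. \<forall>N. \<exists>n\<ge>N. Scount f G n x < r * n + c}"
  have Em: "E \<in> sets M" unfolding E_def using G by measurable
  have inv: "f -` E \<inter> space M = E"
  proof (intro set_eqI iffI)
    fix x assume x: "x \<in> f -` E \<inter> space M"
    then obtain c :: nat where c: "\<And>N. \<exists>n\<ge>N. Scount f G n (f x) < r * n + c" unfolding E_def by auto
    define c' where "c' = c + 1 + nat \<lceil>r\<rceil>"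
    have "\<exists>n\<ge>N. Scount f G n x < r * n + c'" for N
    proof -
      obtain n where n: "n \<ge> N" "Scount f G n (f x) < r * n + c" using c by blast
      have "Scount f G (Suc n) x = indicator G x + Scount f G n (f x)" by (rule Scount_Suc)
      also have "\<dots> < 1 + r * n + c" using n by (simp add: indicator_def)
      also have "\<dots> \<le> r * Suc n + c'" unfolding c'_def using rpos by (simp add: algebra_simps)
      finally show ?thesis using n by (intro exI[of _ "Suc n"]) auto
    qed
    thus "x \<in> E" using x unfolding E_def by auto
  next
    fix x assume x: "x \<in> E"
    then obtain c :: nat where c: "\<And>N. \<exists>n\<ge>N. Scount f G n x < r * n + c" and xs: "x \<in> space M"
      unfolding E_def by auto
    define c' where "c' = c + nat \<lceil>r\<rceil>"
    have "\<exists>n\<ge>N. Scount f G n (f x) < r * n + c'" for N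
    proof -
      obtain n where n: "n \<ge> Suc N" "Scount f G n x < r * n + c" using c by blast
      then obtain m where m: "n = Suc m" "m \<ge> N" by (cases n) auto
      have "Scount f G m (f x) \<le> Scount f G (Suc m) x"
        using Scount_Suc[of f G m x] by (simp add: indicator_def)
      also have "\<dots> < r * Suc m + c" using n m by simp
      also have "\<dots> \<le> r * m + c'" unfolding c'_def using rpos by (simp add: algebra_simps) linarith?
      finally show ?thesis using m by auto
    qed
    thus "x \<in> f -` E \<inter> space M" using xs fsp unfolding E_def by auto
  qed
  have E0: "measure M E = 0"
  proof (rule ccontr)
    assume "measure M E \<noteq> 0"
    hence E1: "measure M E = 1" using erg Em inv by blast
    define r' where "r' = (r + measure M G) / 2"
    have r': "r < r'" "r' < measure M G" "0 \<le> r'" using r rpos unfolding r'_def by auto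
    define B where "B K = {x\<in>space M. \<not> (\<exists>t\<in>{1..K}. Scount f G t x \<le> r' * t)}" for K :: nat
    have Bm: "B K \<in> sets M" for K unfolding B_def using G by measurable
    have Bdec: "decseq B" unfolding B_def decseq_def by auto
    have "(\<Inter>K. B K) \<subseteq> space M - E"
    proof
      fix x assume x: "x \<in> (\<Inter>K. B K)"
      hence xs: "x \<in> space M" unfolding B_def by auto
      show "x \<in> space M - E"
      proof (rule ccontr)
        assume "x \<notin> space M - E"
        then obtain c :: nat where c: "\<And>N. \<exists>n\<ge>N. Scount f G n x < r * n + c" using xs unfolding E_def by auto
        obtain n where n: "n \<ge> Suc (nat \<lceil>c / (r' - r)\<rceil>)" "Scount f G n x < r * n + c" using c by blast
        have "c / (r' - r) \<le> n" using n(1) by linarith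
        hence "c \<le> (r' - r) * n" using r' by (simp add: field_simps)
        hence "Scount f G n x \<le> r' * n" using n(2) by (simp add: algebra_simps)
        moreover have "n \<ge> 1" using n by simp
        ultimately have "x \<notin> B n" unfolding B_def by auto
        thus False using x by auto
      qed
    qed
    hence "measure M (\<Inter>K. B K) \<le> measure M (space M - E)"
      using Bm Em by (intro finite_measure_mono) auto
    also have "\<dots> = 0" using E1 Em by (simp add: prob_compl)
    finally have "measure M (\<Inter>K. B K) = 0" using measure_nonneg[of M "\<Inter>K. B K"] by linarith
    hence lim: "(\<lambda>K. measure M (B K)) \<longlonglongrightarrow> 0"
      using finite_Lim_measure_decseq[of B] Bm Bdec by auto
    have "eventually (\<lambda>K. measure M (B K) < (measure M G - r') / 2) sequentially"
      using order_tendstoD(2)[OF lim, of "(measure M G - r') / 2"] r' by simp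
    then obtain K where K: "measure M (B K) < (measure M G - r') / 2" by (auto simp: eventually_sequentially)
    define N :: nat where "N = nat \<lceil>2 * K / (measure M G - r')\<rceil> + 1"
    have Npos: "N > 0" unfolding N_def by simp
    have NK: "K / N < (measure M G - r') / 2"
    proof -
      have "2 * K / (measure M G - r') < N" unfolding N_def by linarith
      thus ?thesis using r' Npos by (simp add: field_simps)
    qed
    define B' where "B' = {x. \<not> (\<exists>t\<in>{1..K}. Scount f G t x \<le> r' * t)}"
    have til: "Scount f G N x \<le> r' * N + Scount f B' N x + K" for x
      by (rule tiling[OF r'(3)]) (simp add: B'_def)
    have eqB: "Scount f B' N x = Scount f (B K) N x" if "x \<in> space M" for x
    proof -
      have "(f ^^ j) x \<in> space M" for j using measurable_space[OF measurable_funpow[OF f(1)] that] .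
      thus ?thesis unfolding Scount_def B_def B'_def by (intro sum.cong) (auto simp: indicator_def)
    qed
    have intS: "integral\<^sup>L M (\<lambda>x. Scount f H N x) = N * measure M H" if "H \<in> sets M" for H
    proof -
      have "integrable M (\<lambda>x. indicator H ((f ^^ j) x) :: real)" for j
        using measurable_funpow[OF f(1), of j] that
        by (intro integrable_const_bound[where B=1]) (auto simp: indicator_def)
      hence "integral\<^sup>L M (\<lambda>x. Scount f H N x) = (\<Sum>j<N. integral\<^sup>L M (\<lambda>x. indicator H ((f ^^ j) x) :: real))"
        unfolding Scount_def using Bochner_Integration.integral_sum[where I="{..<N}" and f="\<lambda>j x. indicator H ((f ^^ j) x) :: real"] by simp
      also have "\<dots> = N * measure M H" using integral_indicator_funpow[OF f that] by simp
      finally show ?thesis .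
    qed
    have intg: "integrable M (\<lambda>x. Scount f H N x)" if "H \<in> sets M" for H
      using that by (intro integrable_const_bound[where B=N]) (auto simp: Scount_nonneg Scount_le)
    have "integral\<^sup>L M (\<lambda>x. Scount f G N x) \<le> integral\<^sup>L M (\<lambda>x. r' * N + Scount f (B K) N x + K)"
      using intg G Bm by (intro integral_mono) (auto simp: til eqB[symmetric])
    hence "N * measure M G \<le> r' * N + N * measure M (B K) + K"
      using intS[OF G] intS[OF Bm] intg[OF Bm] by (simp add: prob_space)
    hence "measure M G \<le> r' + measure M (B K) + K / N"
      using Npos by (simp add: field_simps)
    thus False using K NK by (smt (verit) field_sum_of_halves)
  qed
  have "E \<in> null_sets M" using Em E0 by (simp add: null_sets_def emeasure_eq_measure)
  moreover have "{x\<in>space M. \<not> (\<exists>N. \<forall>n\<ge>N. r * n \<le> Scount f G n x)} \<subseteq> E"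
  proof safe
    fix x assume xs: "x \<in> space M" and nx: "\<not> (\<exists>N. \<forall>n\<ge>N. r * n \<le> Scount f G n x)"
    hence "\<forall>N. \<exists>n\<ge>N. Scount f G n x < r * n + real (0::nat)" by (auto simp: not_le)
    thus "x \<in> E" using xs unfolding E_def by blast
  qed
  ultimately show ?thesis by (rule AE_I')
qed




lemma cocycle_add: "cocycle A \<theta> (a + b) x = cocycle A \<theta> a ((\<theta> ^^ b) x) ** cocycle A \<theta> b x"
proof (induction a)
  case 0 thus ?case by simp
next
  case (Suc a)
  have "(\<theta> ^^ (a + b)) x = (\<theta> ^^ a) ((\<theta> ^^ b) x)" by (simp add: funpow_add)
  thus ?case using Suc by (simp add: matrix_mul_assoc)
qed

lemma funpow_inv:
  assumes inv: "\<And>x. x \<in> S \<Longrightarrow> \<theta>i (\<theta> x) = x" and cl: "\<And>x. x \<in> S \<Longrightarrow> \<theta> x \<in> S" and x: "x \<in> S"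
  shows "N \<le> n \<Longrightarrow> (\<theta>i ^^ N) ((\<theta> ^^ n) x) = (\<theta> ^^ (n - N)) x"
proof (induction N arbitrary: n)
  case 0 thus ?case by simp
next
  case (Suc N)
  have mem: "(\<theta> ^^ k) x \<in> S" for k using x cl by (induction k) auto
  have "(\<theta>i ^^ Suc N) ((\<theta> ^^ n) x) = \<theta>i ((\<theta> ^^ (n - N)) x)" using Suc by simp
  also have "\<dots> = \<theta>i (\<theta> ((\<theta> ^^ (n - Suc N)) x))"
    using Suc.prems by (simp add: Suc_diff_Suc[symmetric] Suc_le_lessD)
  also have "\<dots> = (\<theta> ^^ (n - Suc N)) x" using inv mem by simp
  finally show ?case .
qed

definition pback :: "('a \<Rightarrow> 'a) \<Rightarrow> ('a \<Rightarrow> nat) \<Rightarrow> 'a \<Rightarrow> 'a" where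
  "pback \<theta>i Nm \<omega> = (\<theta>i ^^ Nm \<omega>) \<omega>"

primrec chain :: "(real \<Rightarrow> 'a \<Rightarrow> 'k::finite mat) \<Rightarrow> ('a \<Rightarrow> 'a) \<Rightarrow> ('a \<Rightarrow> 'a) \<Rightarrow> ('a \<Rightarrow> nat) \<Rightarrow> nat \<Rightarrow> real \<Rightarrow> 'a \<Rightarrow> 'k mat" where
  "chain A \<theta> \<theta>i Nm 0 \<epsilon> \<omega> = mat 1"
| "chain A \<theta> \<theta>i Nm (Suc i) \<epsilon> \<omega> = cocycle (A \<epsilon>) \<theta> (Nm \<omega>) (pback \<theta>i Nm \<omega>) ** chain A \<theta> \<theta>i Nm i \<epsilon> (pback \<theta>i Nm \<omega>)"

primrec tlen :: "('a \<Rightarrow> 'a) \<Rightarrow> ('a \<Rightarrow> nat) \<Rightarrow> nat \<Rightarrow> 'a \<Rightarrow> nat" where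
  "tlen \<theta>i Nm 0 \<omega> = 0"
| "tlen \<theta>i Nm (Suc i) \<omega> = Nm \<omega> + tlen \<theta>i Nm i (pback \<theta>i Nm \<omega>)"

lemma chain_decomp:
  assumes inv: "\<And>x. x \<in> S \<Longrightarrow> \<theta>i (\<theta> x) = x" and cl: "\<And>x. x \<in> S \<Longrightarrow> \<theta> x \<in> S" and x: "x \<in> S"
  shows "tlen \<theta>i Nm i ((\<theta> ^^ n) x) \<le> n \<Longrightarrow>
    cocycle (A \<epsilon>) \<theta> n x = chain A \<theta> \<theta>i Nm i \<epsilon> ((\<theta> ^^ n) x) ** cocycle (A \<epsilon>) \<theta> (n - tlen \<theta>i Nm i ((\<theta> ^^ n) x)) x"
proof (induction i arbitrary: n)
  case 0 thus ?case by simp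
next
  case (Suc i)
  define y where "y = (\<theta> ^^ n) x"
  define N where "N = Nm y"
  have Nn: "N \<le> n" using Suc.prems by (simp add: y_def N_def)
  have hb: "pback \<theta>i Nm y = (\<theta> ^^ (n - N)) x"
    unfolding pback_def y_def N_def using funpow_inv[OF inv cl x Nn] by (simp add: y_def N_def)
  have split: "cocycle (A \<epsilon>) \<theta> n x = cocycle (A \<epsilon>) \<theta> N ((\<theta> ^^ (n - N)) x) ** cocycle (A \<epsilon>) \<theta> (n - N) x"
    using cocycle_add[of "A \<epsilon>" \<theta> N "n - N" x] Nn by simp
  have tl: "tlen \<theta>i Nm i ((\<theta> ^^ (n - N)) x) \<le> n - N"
    using Suc.prems by (simp add: y_def[symmetric] N_def[symmetric] hb[symmetric])
  have IH: "cocycle (A \<epsilon>) \<theta> (n - N) x = chain A \<theta> \<theta>i Nm i \<epsilon> ((\<theta> ^^ (n - N)) x) **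
      cocycle (A \<epsilon>) \<theta> (n - N - tlen \<theta>i Nm i ((\<theta> ^^ (n - N)) x)) x"
    using Suc.IH[OF tl] .
  show ?case
    unfolding y_def[symmetric]
    using split IH by (simp add: hb N_def matrix_mul_assoc)
qed

lemma col_stochastic_mult:
  assumes "col_stochastic P" "col_stochastic Q"
  shows "col_stochastic (P ** Q)"
proof -
  have nn: "(P ** Q) $ i $ j \<ge> 0" for i j
    using assms unfolding col_stochastic_def matrix_matrix_mult_def by (auto intro!: sum_nonneg)
  have "(\<Sum>i\<in>UNIV. (P ** Q) $ i $ j) = 1" for j
  proof -
    have "(\<Sum>i\<in>UNIV. (P ** Q) $ i $ j) = (\<Sum>i\<in>UNIV. \<Sum>k\<in>UNIV. P $ i $ k * Q $ k $ j)"
      by (simp add: matrix_matrix_mult_def)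
    also have "\<dots> = (\<Sum>k\<in>UNIV. (\<Sum>i\<in>UNIV. P $ i $ k) * Q $ k $ j)"
      by (subst sum.swap) (simp add: sum_distrib_right)
    also have "\<dots> = 1" using assms unfolding col_stochastic_def by simp
    finally show ?thesis .
  qed
  thus ?thesis using nn unfolding col_stochastic_def by simp
qed

lemma col_stochastic_one: "col_stochastic (mat 1 :: 'k::finite mat)"
  unfolding col_stochastic_def by (auto simp: mat_def sum.delta)

lemma col_stochastic_simplex:
  assumes "col_stochastic P" "u \<in> simplex1"
  shows "P *v u \<in> simplex1"
proof -
  have "(P *v u) $ i \<ge> 0" for i
    using assms unfolding col_stochastic_def simplex1_def matrix_vector_mult_def by (auto intro!: sum_nonneg)
  moreover have "(\<Sum>i\<in>UNIV. (P *v u) $ i) = 1"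
  proof -
    have "(\<Sum>i\<in>UNIV. (P *v u) $ i) = (\<Sum>i\<in>UNIV. \<Sum>k\<in>UNIV. P $ i $ k * u $ k)"
      by (simp add: matrix_vector_mult_def)
    also have "\<dots> = (\<Sum>k\<in>UNIV. (\<Sum>i\<in>UNIV. P $ i $ k) * u $ k)"
      by (subst sum.swap) (simp add: sum_distrib_right)
    also have "\<dots> = 1" using assms unfolding col_stochastic_def simplex1_def by simp
    finally show ?thesis .
  qed
  ultimately show ?thesis unfolding simplex1_def by simp
qed

lemma e_vec_simplex: "e_vec j \<in> simplex1"
  unfolding simplex1_def e_vec_def by (auto simp: axis_def sum.delta)

lemma mult_e_vec_sum: "P *v u = (\<Sum>j\<in>UNIV. u $ j *\<^sub>R (P *v e_vec j))"
  by (simp add: vec_eq_iff matrix_vector_mult_def e_vec_def axis_def sum_distrib_left mult.commute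
       if_distrib cong: if_cong)




lemma AE_transport:
  assumes f: "f \<in> M \<rightarrow>\<^sub>M M" "distr M M f = M" and P: "AE x in M. P x"
  shows "AE x in M. P (f x)"
proof -
  obtain N where N: "{x \<in> space M. \<not> P x} \<subseteq> N" "N \<in> null_sets M"
    using AE_E[OF P] by (metis null_setsI)
  have "f -` N \<inter> space M \<in> null_sets M"
  proof -
    have "N \<in> sets M" using N by auto
    have "emeasure (distr M M f) N = emeasure M (f -` N \<inter> space M)"
      by (rule emeasure_distr) (use f \<open>N \<in> sets M\<close> in auto)
    hence "emeasure M (f -` N \<inter> space M) = emeasure M N" using f(2) by simp
    thus ?thesis using N f \<open>N \<in> sets M\<close> by (simp add: null_sets_def)
  qed
  moreover have "{x \<in> space M. \<not> P (f x)} \<subseteq> f -` N \<inter> space M"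
    using N f(1) measurable_space[OF f(1)] by blast
  ultimately show ?thesis by (rule AE_I')
qed

lemma sum_mat_vec: "(\<Sum>s\<in>S. F s) *v (x::real^'n) = (\<Sum>s\<in>S. F s *v x)"
  by (induction S rule: infinite_finite_induct) (auto simp: matrix_vector_mult_add_rdistrib)

lemma scaleR_mat_vec: "(c *\<^sub>R F) *v (x::real^'n) = c *\<^sub>R (F *v x)"
  by (simp add: vec_eq_iff matrix_vector_mult_def sum_distrib_left mult.assoc)

lemma colsum_bl: "bounded_linear (\<lambda>M::real^'k::finite^'k. \<Sum>i\<in>UNIV. (M *v v) $ i)"
proof -
  have "linear (\<lambda>M::real^'k::finite^'k. \<Sum>i\<in>UNIV. (M *v v) $ i)"
    by (auto simp: linear_iff matrix_vector_mult_add_rdistrib scaleR_mat_vec sum.distrib sum_distrib_left)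
  thus ?thesis using linear_conv_bounded_linear by blast
qed

lemma dot_simplex_bound:
  fixes u y :: "real^'k::finite"
  assumes u: "u \<in> simplex1" and y: "y \<in> simplex1"
  shows "(\<Sum>i\<in>UNIV. u $ i * y $ i) \<le> max (y $ J) (1 - y $ J)"
proof -
  have un: "\<And>i. u $ i \<ge> 0" "(\<Sum>i\<in>UNIV. u $ i) = 1" using u unfolding simplex1_def by auto
  have yn: "\<And>i. y $ i \<ge> 0" "(\<Sum>i\<in>UNIV. y $ i) = 1" using y unfolding simplex1_def by auto
  have ys: "(\<Sum>i\<in>UNIV - {J}. y $ i) = 1 - y $ J" using yn(2) sum.remove[of UNIV J "\<lambda>i. y $ i"] by simp
  have us: "(\<Sum>i\<in>UNIV - {J}. u $ i) = 1 - u $ J" using un(2) sum.remove[of UNIV J "\<lambda>i. u $ i"] by simp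
  have yle: "y $ i \<le> 1 - y $ J" if "i \<noteq> J" for i
  proof -
    have "y $ i \<le> (\<Sum>i\<in>UNIV - {J}. y $ i)"
      using that yn(1) by (intro member_le_sum) auto
    thus ?thesis using ys by simp
  qed
  have "(\<Sum>i\<in>UNIV. u $ i * y $ i) = u $ J * y $ J + (\<Sum>i\<in>UNIV - {J}. u $ i * y $ i)"
    using sum.remove[of UNIV J "\<lambda>i. u $ i * y $ i"] by simp
  also have "(\<Sum>i\<in>UNIV - {J}. u $ i * y $ i) \<le> (\<Sum>i\<in>UNIV - {J}. u $ i * (1 - y $ J))"
    using yle un(1) by (intro sum_mono mult_left_mono) auto
  also have "\<dots> = (1 - u $ J) * (1 - y $ J)" using us by (simp add: sum_distrib_right[symmetric])
  also have "u $ J * y $ J + (1 - u $ J) * (1 - y $ J) \<le> u $ J * max (y $ J) (1 - y $ J) + (1 - u $ J) * max (y $ J) (1 - y $ J)"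
  proof -
    have "u $ J \<le> 1" using us un(1) sum_nonneg[of "UNIV - {J}" "\<lambda>i. u $ i"] by auto
    thus ?thesis using un(1)[of J] by (intro add_mono mult_left_mono) auto
  qed
  also have "\<dots> = max (y $ J) (1 - y $ J)" by (simp add: algebra_simps)
  finally show ?thesis by simp
qed

lemma mv_e_vec_nth: "(P *v e_vec j) $ i = P $ i $ j"
  by (simp add: matrix_vector_mult_def e_vec_def axis_def if_distrib cong: if_cong)

lemma mat_entry_le_norm: "\<bar>P $ i $ j\<bar> \<le> norm (P :: real^'n^'m)"
  using component_le_norm_cart[of "P $ i" j] Finite_Cartesian_Product.norm_nth_le[of P i] by linarith

declare qvec.simps[simp del]

lemma bilin_bound:
  fixes C :: "real^'k::finite^'k"
  assumes w: "w \<in> simplex1" and w': "w' \<in> simplex1"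
    and c: "\<And>j j'. 1 - (\<Sum>i\<in>UNIV. (C *v e_vec j) $ i * (C *v e_vec j') $ i) \<ge> c"
  shows "1 - (\<Sum>i\<in>UNIV. (C *v w) $ i * (C *v w') $ i) \<ge> c"
proof -
  have wn: "\<And>j. w $ j \<ge> 0" "(\<Sum>j\<in>UNIV. w $ j) = 1" using w unfolding simplex1_def by auto
  have wn': "\<And>j. w' $ j \<ge> 0" "(\<Sum>j\<in>UNIV. w' $ j) = 1" using w' unfolding simplex1_def by auto
  define S where "S j j' = (\<Sum>i\<in>UNIV. C $ i $ j * C $ i $ j')" for j j'
  have e1: "(\<Sum>i\<in>UNIV. (C *v w) $ i * (C *v w') $ i) = (\<Sum>j\<in>UNIV. \<Sum>j'\<in>UNIV. w $ j * w' $ j' * S j j')"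
  proof -
    have "(\<Sum>i\<in>UNIV. (C *v w) $ i * (C *v w') $ i)
        = (\<Sum>i\<in>UNIV. (\<Sum>j\<in>UNIV. C $ i $ j * w $ j) * (\<Sum>j'\<in>UNIV. C $ i $ j' * w' $ j'))"
      by (simp add: matrix_vector_mult_def)
    also have "\<dots> = (\<Sum>i\<in>UNIV. \<Sum>j\<in>UNIV. \<Sum>j'\<in>UNIV. (C $ i $ j * w $ j) * (C $ i $ j' * w' $ j'))"
      by (simp add: sum_product)
    also have "\<dots> = (\<Sum>j\<in>UNIV. \<Sum>i\<in>UNIV. \<Sum>j'\<in>UNIV. (C $ i $ j * w $ j) * (C $ i $ j' * w' $ j'))"
      by (rule sum.swap)
    also have "\<dots> = (\<Sum>j\<in>UNIV. \<Sum>j'\<in>UNIV. \<Sum>i\<in>UNIV. (C $ i $ j * w $ j) * (C $ i $ j' * w' $ j'))"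
      by (intro sum.cong refl sum.swap)
    also have "\<dots> = (\<Sum>j\<in>UNIV. \<Sum>j'\<in>UNIV. w $ j * w' $ j' * S j j')"
      unfolding S_def by (simp add: sum_distrib_left mult_ac)
    finally show ?thesis .
  qed
  have e2: "(\<Sum>j\<in>UNIV. \<Sum>j'\<in>UNIV. w $ j * w' $ j') = 1"
    using wn(2) wn'(2) by (simp add: sum_product[symmetric])
  have Sc: "1 - S j j' \<ge> c" for j j' using c[of j j'] by (simp add: mv_e_vec_nth S_def)
  have "1 - (\<Sum>i\<in>UNIV. (C *v w) $ i * (C *v w') $ i) = (\<Sum>j\<in>UNIV. \<Sum>j'\<in>UNIV. w $ j * w' $ j' * (1 - S j j'))"
    unfolding e1 using e2 by (simp add: algebra_simps sum_subtractf)
  also have "\<dots> \<ge> (\<Sum>j\<in>UNIV. \<Sum>j'\<in>UNIV. w $ j * w' $ j' * c)"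
    using Sc wn(1) wn'(1) by (intro sum_mono mult_left_mono) auto
  also have "(\<Sum>j\<in>UNIV. \<Sum>j'\<in>UNIV. w $ j * w' $ j' * c) = c"
    using e2 by (simp add: sum_distrib_right[symmetric])
  finally show ?thesis .
qed

lemma card_F:
  fixes n kk :: nat
  assumes "kk \<ge> 1"
  shows "real (card {j. j < n \<and> P j}) \<le> real (card ({j. kk \<le> j \<and> P j} \<inter> {1..n})) + kk"
proof -
  have "{j. j < n \<and> P j} \<subseteq> ({j. kk \<le> j \<and> P j} \<inter> {1..n}) \<union> {..<kk}" using assms by auto
  hence "card {j. j < n \<and> P j} \<le> card (({j. kk \<le> j \<and> P j} \<inter> {1..n}) \<union> {..<kk})"
    by (intro card_mono finite_UnI finite_Int[OF disjI2]) auto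
  also have "\<dots> \<le> card ({j. kk \<le> j \<and> P j} \<inter> {1..n}) + card {..<kk}" by (rule card_Un_le)
  finally show ?thesis by simp
qed

lemma Scount_card: "Scount f G n x = real (card {j. j < n \<and> (f ^^ j) x \<in> G})"
  unfolding Scount_def indicator_def
  by (simp add: sum.If_cases) (simp add: Int_def lessThan_def conj_commute)

locale lsetup =
  fixes M :: "'a measure" and \<theta> \<theta>i :: "'a \<Rightarrow> 'a" and A :: "real \<Rightarrow> 'a \<Rightarrow> real^'k::finite^'k"
    and J :: "'a \<Rightarrow> 'k" and Nm :: "'a \<Rightarrow> nat" and m :: nat and e0 :: real
  assumes mds: "invertible_mds M \<theta> \<theta>i"
    and Nm_prop: "AE \<omega> in M. \<forall>n j. n \<ge> Nm \<omega> \<longrightarrow>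
                     cocycle (A 0) \<theta> n ((\<theta>i ^^ n) \<omega>) *v e_vec j = e_vec (J \<omega>)"
    and MRN: "\<And>\<epsilon>. \<epsilon> \<ge> 0 \<Longrightarrow> MRN M (A \<epsilon>)"
    and e0: "e0 > 0"
    and CmAE: "AE \<omega> in M. Cm_on m (\<lambda>\<epsilon>. A \<epsilon> \<omega>) {0..e0}"
    and Nm_meas: "Nm \<in> M \<rightarrow>\<^sub>M count_space UNIV"
    and m_pos: "m \<ge> 1"
begin

lemma prob: "prob_space M" using mds by (simp add: invertible_mds_def)
lemma th_meas: "\<theta> \<in> M \<rightarrow>\<^sub>M M" using mds by (simp add: invertible_mds_def)
lemma thi_meas: "\<theta>i \<in> M \<rightarrow>\<^sub>M M" using mds by (simp add: invertible_mds_def)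
lemma inv1: "x \<in> space M \<Longrightarrow> \<theta>i (\<theta> x) = x" using mds by (simp add: invertible_mds_def)
lemma inv2: "x \<in> space M \<Longrightarrow> \<theta> (\<theta>i x) = x" using mds by (simp add: invertible_mds_def)
lemma distr_th: "distr M M \<theta> = M" using mds by (simp add: invertible_mds_def)
lemma erg: "\<forall>A\<in>sets M. \<theta> -` A \<inter> space M = A \<longrightarrow> measure M A = 0 \<or> measure M A = 1"
  using mds by (simp add: invertible_mds_def)
lemma th_sp: "x \<in> space M \<Longrightarrow> \<theta> x \<in> space M" using th_meas by (simp add: measurable_space)
lemma thi_sp: "x \<in> space M \<Longrightarrow> \<theta>i x \<in> space M" using thi_meas by (simp add: measurable_space)

lemma distr_thi: "distr M M \<theta>i = M"
proof (rule measure_eqI)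
  fix X assume X: "X \<in> sets (distr M M \<theta>i)"
  hence Xs: "X \<in> sets M" by simp
  have m: "\<theta>i -` X \<inter> space M \<in> sets M" using thi_meas Xs by (simp add: measurable_sets)
  have eq: "\<theta> -` (\<theta>i -` X \<inter> space M) \<inter> space M = X \<inter> space M"
    using inv1 th_sp sets.sets_into_space[OF Xs] by auto
  have "emeasure (distr M M \<theta>i) X = emeasure M (\<theta>i -` X \<inter> space M)"
    using thi_meas Xs by (simp add: emeasure_distr)
  also have "\<dots> = emeasure (distr M M \<theta>) (\<theta>i -` X \<inter> space M)" using distr_th by simp
  also have "\<dots> = emeasure M (\<theta> -` (\<theta>i -` X \<inter> space M) \<inter> space M)"
    using th_meas m by (simp add: emeasure_distr)
  also have "\<dots> = emeasure M X" using eq sets.sets_into_space[OF Xs] by (simp add: Int_absorb2)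
  finally show "emeasure (distr M M \<theta>i) X = emeasure M X" .
qed simp

definition nice :: "'a \<Rightarrow> bool" where
  "nice \<omega> \<longleftrightarrow> \<omega> \<in> space M \<and> Cm_on m (\<lambda>\<epsilon>. A \<epsilon> \<omega>) {0..e0} \<and>
     (\<forall>q::rat. 0 \<le> q \<longrightarrow> col_stochastic (A (of_rat q) \<omega>)) \<and>
     (\<forall>n j. n \<ge> Nm \<omega> \<longrightarrow> cocycle (A 0) \<theta> n ((\<theta>i ^^ n) \<omega>) *v e_vec j = e_vec (J \<omega>))"

definition good :: "'a \<Rightarrow> bool" where
  "good \<omega> \<longleftrightarrow> (\<forall>a b. nice ((\<theta> ^^ a) ((\<theta>i ^^ b) \<omega>)))"

lemma AE_nice: "AE \<omega> in M. nice \<omega>"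
proof -
  have "AE \<omega> in M. \<forall>q::rat. 0 \<le> q \<longrightarrow> col_stochastic (A (of_rat q) \<omega>)"
  proof (subst AE_all_countable, intro allI)
    fix q :: rat
    show "AE \<omega> in M. 0 \<le> q \<longrightarrow> col_stochastic (A (of_rat q) \<omega>)"
    proof (cases "0 \<le> q")
      case True
      hence "MRN M (A (of_rat q))" using MRN by simp
      thus ?thesis unfolding MRN_def by auto
    qed simp
  qed
  thus ?thesis using Nm_prop CmAE unfolding nice_def by auto
qed

lemma AE_good: "AE \<omega> in M. good \<omega>"
proof -
  have "AE \<omega> in M. nice ((\<theta> ^^ a) ((\<theta>i ^^ b) \<omega>))" for a b
  proof -
    have "AE \<omega> in M. nice ((\<theta> ^^ a) \<omega>)"
      using AE_transport[OF measurable_funpow[OF th_meas] distr_funpow[OF th_meas distr_th] AE_nice] .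
    from AE_transport[OF measurable_funpow[OF thi_meas] distr_funpow[OF thi_meas distr_thi] this]
    show ?thesis .
  qed
  thus ?thesis unfolding good_def by (simp add: AE_all_countable)
qed

lemma good_nice: "good \<omega> \<Longrightarrow> nice \<omega>"
  unfolding good_def by (metis funpow_0)

lemma good_space: "good \<omega> \<Longrightarrow> \<omega> \<in> space M"
  using good_nice nice_def by blast

lemma good_thi: "good \<omega> \<Longrightarrow> good (\<theta>i \<omega>)"
  unfolding good_def by (metis funpow_Suc_right comp_apply)

lemma good_th: "good \<omega> \<Longrightarrow> good (\<theta> \<omega>)"
  unfolding good_def
proof (intro allI)
  fix a b assume g: "\<forall>a b. nice ((\<theta> ^^ a) ((\<theta>i ^^ b) \<omega>))"
  have sp: "\<omega> \<in> space M" using g[rule_format, of 0 0] by (simp add: nice_def)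
  show "nice ((\<theta> ^^ a) ((\<theta>i ^^ b) (\<theta> \<omega>)))"
  proof (cases b)
    case 0
    thus ?thesis using g[rule_format, of "Suc a" 0] by (simp add: funpow_swap1)
  next
    case (Suc b')
    have "(\<theta>i ^^ b) (\<theta> \<omega>) = (\<theta>i ^^ b') \<omega>" using Suc inv1[OF sp] by (simp only: funpow_Suc_right comp_apply)
    thus ?thesis using g by simp
  qed
qed

lemma good_thi_pow: "good \<omega> \<Longrightarrow> good ((\<theta>i ^^ n) \<omega>)"
  by (induction n) (auto intro: good_thi)

lemma good_th_pow: "good \<omega> \<Longrightarrow> good ((\<theta> ^^ n) \<omega>)"
  by (induction n) (auto intro: good_th)

lemma good_pback: "good \<omega> \<Longrightarrow> good (pback \<theta>i Nm \<omega>)"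
  unfolding pback_def by (rule good_thi_pow)


lemma closure_rat_Icc: "e > 0 \<Longrightarrow> closure ({0..e} \<inter> \<rat>) = {0..(e::real)}"
  using closure_convex_Int_superset[of "{0..e}" \<rat>] Rats_closure_real by auto

lemma Cm_on_cont: "Cm_on m f S \<Longrightarrow> continuous_on S f"
proof -
  assume "Cm_on m f S"
  then obtain D where D: "\<And>x. x \<in> S \<Longrightarrow> D 0 x = f x" "CmW m D S" using Cm_onE by metis
  have "continuous_on S (D 0)" using CmW_cont[OF D(2)] by simp
  thus ?thesis using D(1) continuous_on_eq by metis
qed

lemma mat_entry_cont:
  fixes f :: "real \<Rightarrow> real^'n^'m"
  shows "continuous_on S f \<Longrightarrow> continuous_on S (\<lambda>x. f x $ i $ j)"
  by (intro continuous_on_component)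

lemma nice_stoch:
  assumes "nice \<omega>" "\<epsilon> \<in> {0..e0}"
  shows "col_stochastic (A \<epsilon> \<omega>)"
proof -
  have c: "continuous_on {0..e0} (\<lambda>\<epsilon>. A \<epsilon> \<omega>)" using assms Cm_on_cont unfolding nice_def by blast
  have cl: "closure ({0..e0} \<inter> \<rat>) = {0..e0}" using closure_rat_Icc[OF e0] .
  have rat: "col_stochastic (A r \<omega>)" if "r \<in> {0..e0} \<inter> \<rat>" for r
  proof -
    from that obtain q where q: "r = of_rat q" by (auto elim: Rats_cases)
    hence "0 \<le> q" using that by auto
    thus ?thesis using assms(1) q unfolding nice_def by auto
  qed
  have "A \<epsilon> \<omega> $ i $ j \<ge> 0" for i j
    using continuous_ge_on_closure[where S="{0..e0} \<inter> \<rat>" and f="\<lambda>\<epsilon>. A \<epsilon> \<omega> $ i $ j" and a=0]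
      mat_entry_cont[OF c] cl rat assms(2) unfolding col_stochastic_def by auto
  moreover have "(\<Sum>i\<in>UNIV. A \<epsilon> \<omega> $ i $ j) = 1" for j
  proof -
    have cs: "continuous_on {0..e0} (\<lambda>x. \<Sum>i\<in>UNIV. A x \<omega> $ i $ j)"
      by (intro continuous_on_sum mat_entry_cont c)
    show ?thesis
    using continuous_constant_on_closure[where S="{0..e0} \<inter> \<rat>" and f="\<lambda>\<epsilon>. \<Sum>i\<in>UNIV. A \<epsilon> \<omega> $ i $ j" and a=1]
      cl rat assms(2) cs unfolding col_stochastic_def
    by auto
  qed
  ultimately show ?thesis unfolding col_stochastic_def by auto
qed

lemma cocycle_Cm: "good \<omega> \<Longrightarrow> Cm_on m (\<lambda>\<epsilon>. cocycle (A \<epsilon>) \<theta> n \<omega>) {0..e0}"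
proof (induction n)
  case 0 thus ?case by (simp add: Cm_on_const)
next
  case (Suc n)
  have "nice ((\<theta> ^^ n) \<omega>)" using good_nice good_th_pow Suc.prems by blast
  hence "Cm_on m (\<lambda>\<epsilon>. A \<epsilon> ((\<theta> ^^ n) \<omega>)) {0..e0}" unfolding nice_def by blast
  thus ?case using Suc by (simp add: Cm_on_mult)
qed

lemma cocycle_stoch: "good \<omega> \<Longrightarrow> \<epsilon> \<in> {0..e0} \<Longrightarrow> col_stochastic (cocycle (A \<epsilon>) \<theta> n \<omega>)"
proof (induction n)
  case 0 thus ?case by (simp add: col_stochastic_one)
next
  case (Suc n)
  have "nice ((\<theta> ^^ n) \<omega>)" using good_nice good_th_pow Suc.prems by blast
  thus ?case using Suc nice_stoch by (simp add: col_stochastic_mult)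
qed

lemma chain_Cm: "good \<omega> \<Longrightarrow> Cm_on m (\<lambda>\<epsilon>. chain A \<theta> \<theta>i Nm i \<epsilon> \<omega>) {0..e0}"
proof (induction i arbitrary: \<omega>)
  case 0 thus ?case by (simp add: Cm_on_const)
next
  case (Suc i)
  have g: "good (pback \<theta>i Nm \<omega>)" using good_pback Suc.prems by blast
  show ?case using Cm_on_mult[OF cocycle_Cm[OF g] Suc.IH[OF g]] by simp
qed

lemma chain_stoch: "good \<omega> \<Longrightarrow> \<epsilon> \<in> {0..e0} \<Longrightarrow> col_stochastic (chain A \<theta> \<theta>i Nm i \<epsilon> \<omega>)"
proof (induction i arbitrary: \<omega>)
  case 0 thus ?case by (simp add: col_stochastic_one)
next
  case (Suc i)
  have g: "good (pback \<theta>i Nm \<omega>)" using good_pback Suc.prems by blast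
  show ?case using col_stochastic_mult[OF cocycle_stoch[OF g Suc.prems(2)] Suc.IH[OF g Suc.prems(2)]] by simp
qed

lemma sync0:
  assumes "nice \<omega>"
  shows "cocycle (A 0) \<theta> (Nm \<omega>) (pback \<theta>i Nm \<omega>) *v v = (\<Sum>i\<in>UNIV. v $ i) *\<^sub>R e_vec (J \<omega>)"
proof -
  have e: "cocycle (A 0) \<theta> (Nm \<omega>) (pback \<theta>i Nm \<omega>) *v e_vec j = e_vec (J \<omega>)" for j
    using assms unfolding nice_def pback_def by auto
  show ?thesis
    by (subst mult_e_vec_sum) (simp add: e scaleR_sum_left)
qed


lemma simplex_sum: "v \<in> simplex1 \<Longrightarrow> (\<Sum>i\<in>UNIV. v $ i) = 1"
  unfolding simplex1_def by simp

lemma qstep: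
  assumes g: "good \<omega>" and t: "1 \<le> t" "t \<le> m"
    and IH: "\<And>s. s < t \<Longrightarrow> hder s (\<lambda>\<epsilon>. chain A \<theta> \<theta>i Nm i \<epsilon> (pback \<theta>i Nm \<omega>)) 0 *v e_vec j
                = qvec A \<theta> \<theta>i J Nm s (pback \<theta>i Nm \<omega>)"
  shows "hder t (\<lambda>\<epsilon>. chain A \<theta> \<theta>i Nm (Suc i) \<epsilon> \<omega>) 0 *v e_vec j = qvec A \<theta> \<theta>i J Nm t \<omega>"
proof -
  define w where "w = pback \<theta>i Nm \<omega>"
  have gw: "good w" using good_pback[OF g] by (simp add: w_def)
  define P where "P = (\<lambda>\<epsilon>. cocycle (A \<epsilon>) \<theta> (Nm \<omega>) w)"
  define C where "C = (\<lambda>\<epsilon>. chain A \<theta> \<theta>i Nm i \<epsilon> w)"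
  have ch: "(\<lambda>\<epsilon>. chain A \<theta> \<theta>i Nm (Suc i) \<epsilon> \<omega>) = (\<lambda>\<epsilon>. P \<epsilon> ** C \<epsilon>)"
    by (simp add: P_def C_def w_def)
  have hm: "hder t (\<lambda>\<epsilon>. P \<epsilon> ** C \<epsilon>) 0 = (\<Sum>s\<le>t. real (t choose s) *\<^sub>R (hder (t - s) P 0 ** hder s C 0))"
    unfolding P_def C_def using cocycle_Cm[OF gw] chain_Cm[OF gw] e0 t
    by (intro hder_mult) auto
  have Pd: "hder (t - s) P 0 = Pder A \<theta> (t - s) (Nm \<omega>) w" for s
    by (simp add: Pder_def P_def)
  have last: "hder 0 P 0 *v (hder t C 0 *v e_vec j) = 0"
  proof -
    have "(\<Sum>r\<in>UNIV. (hder t C 0 *v e_vec j) $ r) = 0"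
      using hder_lin_const[OF chain_Cm[OF gw] e0 colsum_bl, where c=1 and t=t] t
        simplex_sum[OF col_stochastic_simplex[OF chain_stoch[OF gw] e_vec_simplex]]
      unfolding C_def by auto
    moreover have "hder 0 P 0 = cocycle (A 0) \<theta> (Nm \<omega>) (pback \<theta>i Nm \<omega>)" by (simp add: P_def w_def)
    ultimately show ?thesis using sync0[OF good_nice[OF g]] by simp
  qed
  have "hder t (\<lambda>\<epsilon>. chain A \<theta> \<theta>i Nm (Suc i) \<epsilon> \<omega>) 0 *v e_vec j
      = (\<Sum>s\<le>t. real (t choose s) *\<^sub>R (hder (t - s) P 0 *v (hder s C 0 *v e_vec j)))"
    unfolding ch hm by (simp add: sum_mat_vec scaleR_mat_vec matrix_vector_mul_assoc)
  also have "\<dots> = (\<Sum>s<t. real (t choose s) *\<^sub>R (hder (t - s) P 0 *v (hder s C 0 *v e_vec j)))"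
    using last by (simp add: lessThan_Suc_atMost[symmetric])
  also have "\<dots> = (\<Sum>s<t. real (t choose s) *\<^sub>R (Pder A \<theta> (t - s) (Nm \<omega>) w *v qvec A \<theta> \<theta>i J Nm s w))"
    using IH unfolding C_def w_def by (intro sum.cong refl) (simp add: Pd w_def)
  also have "\<dots> = qvec A \<theta> \<theta>i J Nm t \<omega>"
    using t by (subst (2) qvec.simps) (simp add: w_def pback_def Let_def)
  finally show ?thesis .
qed

lemma qzero:
  assumes g: "good \<omega>"
  shows "hder 0 (\<lambda>\<epsilon>. chain A \<theta> \<theta>i Nm (Suc i) \<epsilon> \<omega>) 0 *v e_vec j = qvec A \<theta> \<theta>i J Nm 0 \<omega>"
proof -
  define w where "w = pback \<theta>i Nm \<omega>"
  have gw: "good w" using good_pback[OF g] by (simp add: w_def)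
  have s: "(\<Sum>r\<in>UNIV. (chain A \<theta> \<theta>i Nm i 0 w *v e_vec j) $ r) = 1"
    using simplex_sum[OF col_stochastic_simplex[OF chain_stoch[OF gw] e_vec_simplex]] e0 by simp
  show ?thesis
    using sync0[OF good_nice[OF g], of "chain A \<theta> \<theta>i Nm i 0 w *v e_vec j"] s
    by (subst qvec.simps) (simp add: w_def matrix_vector_mul_assoc[symmetric])
qed

lemma qclaim: "good \<omega> \<Longrightarrow> t \<le> i \<Longrightarrow> t \<le> m \<Longrightarrow>
   hder t (\<lambda>\<epsilon>. chain A \<theta> \<theta>i Nm (Suc i) \<epsilon> \<omega>) 0 *v e_vec j = qvec A \<theta> \<theta>i J Nm t \<omega>"
proof (induction i arbitrary: \<omega> t)
  case 0 thus ?case using qzero[OF 0(1), of 0 j] by simp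
next
  case (Suc i)
  show ?case
  proof (cases "t = 0")
    case True thus ?thesis using qzero[OF Suc.prems(1), of "Suc i" j] by simp
  next
    case False
    show ?thesis
      using Suc.prems False
      by (intro qstep Suc.IH good_pback) auto
  qed
qed

lemma analytic:
  assumes g: "good \<omega>" and l: "1 \<le> l" "l \<le> m"
    and q0: "\<forall>s\<in>{1..l-1}. qvec A \<theta> \<theta>i J Nm s \<omega> = 0" and ql: "qvec A \<theta> \<theta>i J Nm l \<omega> \<noteq> 0"
  shows "\<exists>k::nat. k > 0 \<and> 1 / real k \<le> e0 \<and> (\<forall>\<epsilon>\<in>{0..1 / real k}. \<forall>j j'.
     1 - (\<Sum>i\<in>UNIV. (chain A \<theta> \<theta>i Nm (Suc l) \<epsilon> \<omega> *v e_vec j) $ i * (chain A \<theta> \<theta>i Nm (Suc l) \<epsilon> \<omega> *v e_vec j') $ i)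
       \<ge> \<epsilon> ^ l / real k)"
proof -
  define C where "C = (\<lambda>\<epsilon>. chain A \<theta> \<theta>i Nm (Suc l) \<epsilon> \<omega>)"
  define q where "q = qvec A \<theta> \<theta>i J Nm l \<omega>"
  define JJ where "JJ = J \<omega>"
  have Cm: "Cm_on m C {0..e0}" unfolding C_def using chain_Cm[OF g] .
  have Cst: "\<And>\<epsilon>. \<epsilon> \<in> {0..e0} \<Longrightarrow> col_stochastic (C \<epsilon>)" unfolding C_def using chain_stoch[OF g] by blast
  have Hq: "hder k C 0 *v e_vec j = qvec A \<theta> \<theta>i J Nm k \<omega>" if "k \<le> l" for k j
    unfolding C_def using qclaim[OF g, of k l j] that l by simp
  have q00: "qvec A \<theta> \<theta>i J Nm 0 \<omega> = e_vec JJ" by (subst qvec.simps) (simp add: JJ_def)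
  have poly: "((\<Sum>k\<le>l. (x ^ k / fact k) *\<^sub>R hder k C 0) *v e_vec j) = e_vec JJ + (x ^ l / fact l) *\<^sub>R q" for x j
  proof -
    have "((\<Sum>k\<le>l. (x ^ k / fact k) *\<^sub>R hder k C 0) *v e_vec j) = (\<Sum>k\<le>l. (x ^ k / fact k) *\<^sub>R qvec A \<theta> \<theta>i J Nm k \<omega>)"
      by (simp add: sum_mat_vec scaleR_mat_vec Hq)
    also have "\<dots> = (\<Sum>k\<in>{0, l}. (x ^ k / fact k) *\<^sub>R qvec A \<theta> \<theta>i J Nm k \<omega>)"
      using q0 by (intro sum.mono_neutral_right) auto
    also have "\<dots> = e_vec JJ + (x ^ l / fact l) *\<^sub>R q" using l by (simp add: q00 q_def JJ_def)
    finally show ?thesis .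
  qed
  have tay: "\<exists>d>0. \<forall>x. 0 < x \<and> x < d \<longrightarrow> (\<forall>i j. \<bar>(C x *v e_vec j) $ i - (e_vec JJ $ i + (x ^ l / fact l) * q $ i)\<bar> \<le> \<eta> * x ^ l)"
    if eta: "\<eta> > 0" for \<eta>
  proof -
    obtain d where d: "d > 0" "\<And>x. 0 < x \<and> x < d \<Longrightarrow> norm (C x - (\<Sum>k\<le>l. (x ^ k / fact k) *\<^sub>R hder k C 0)) \<le> \<eta> * x ^ l"
      using taylor_hder[OF Cm e0 l(2) eta] by blast
    show ?thesis
    proof (intro exI[of _ d] conjI allI impI)
      fix x i j assume x: "0 < x \<and> x < d"
      have "(C x *v e_vec j) $ i - (e_vec JJ $ i + (x ^ l / fact l) * q $ i)
          = ((C x - (\<Sum>k\<le>l. (x ^ k / fact k) *\<^sub>R hder k C 0)) *v e_vec j) $ i"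
        using poly[of x j] by (simp add: matrix_vector_mult_diff_rdistrib)
      also have "\<dots> = (C x - (\<Sum>k\<le>l. (x ^ k / fact k) *\<^sub>R hder k C 0)) $ i $ j" by (rule mv_e_vec_nth)
      finally show "\<bar>(C x *v e_vec j) $ i - (e_vec JJ $ i + (x ^ l / fact l) * q $ i)\<bar> \<le> \<eta> * x ^ l"
        using mat_entry_le_norm[of "C x - (\<Sum>k\<le>l. (x ^ k / fact k) *\<^sub>R hder k C 0)" i j] d(2)[OF x] by simp
    qed (use d in auto)
  qed
  have fl: "fact l > (0::real)" by simp
  have qsum: "(\<Sum>i\<in>UNIV. q $ i) = 0"
  proof -
    have "(\<Sum>r\<in>UNIV. (hder l C 0 *v e_vec JJ) $ r) = 0"
      using hder_lin_const[OF Cm e0 colsum_bl, where c=1 and t=l] l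
        simplex_sum[OF col_stochastic_simplex[OF Cst e_vec_simplex]]
      by auto
    thus ?thesis using Hq[of l JJ] by (simp add: q_def)
  qed
  have qnn: "q $ i \<ge> 0" if iJ: "i \<noteq> JJ" for i
  proof (rule ccontr)
    assume neg: "\<not> q $ i \<ge> 0"
    define \<eta> where "\<eta> = - (q $ i / fact l) / 2"
    have qf: "q $ i / fact l < 0" using neg fl by (simp add: divide_neg_pos)
    hence etapos: "\<eta> > 0" unfolding \<eta>_def by simp
    obtain d where d0: "d > 0" and dall: "\<forall>x. 0 < x \<and> x < d \<longrightarrow> (\<forall>i j. \<bar>(C x *v e_vec j) $ i - (e_vec JJ $ i + (x ^ l / fact l) * q $ i)\<bar> \<le> \<eta> * x ^ l)"
      using tay[OF etapos] by (elim exE conjE) 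
    have d: "d > 0" "\<And>x j. 0 < x \<and> x < d \<Longrightarrow> \<bar>(C x *v e_vec j) $ i - (e_vec JJ $ i + (x ^ l / fact l) * q $ i)\<bar> \<le> \<eta> * x ^ l"
      using d0 dall by auto
    define x where "x = min d e0 / 2"
    have x: "0 < x" "x < d" "x \<in> {0..e0}" unfolding x_def using d e0 by auto
    have c0: "(C x *v e_vec JJ) $ i \<ge> 0"
      using col_stochastic_simplex[OF Cst[OF x(3)] e_vec_simplex] unfolding simplex1_def by auto
    have e0i: "e_vec JJ $ i = 0" using iJ by (simp add: e_vec_def axis_def)
    have t1: "\<bar>(C x *v e_vec JJ) $ i - (x ^ l / fact l) * q $ i\<bar> \<le> \<eta> * x ^ l"
      using d(2)[of x JJ] x e0i by simp
    have ml: "x ^ l * (q $ i / fact l) \<ge> x ^ l * (- \<eta>)"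
    proof -
      have "\<eta> * x ^ l = x ^ l * \<eta>" "(x ^ l / fact l) * q $ i = x ^ l * (q $ i / fact l)" by simp_all
      thus ?thesis using t1 c0 unfolding abs_le_iff by linarith
    qed
    have xl: "x ^ l > 0" using x by simp
    have "q $ i / fact l \<ge> - \<eta>" using mult_left_le_imp_le[OF ml xl] .
    moreover have aux: "\<And>y::real. y < 0 \<Longrightarrow> - (- y / 2) \<le> y \<Longrightarrow> False" by linarith
    ultimately show False using qf unfolding \<eta>_def by blast
  qed
  have sumrest: "q $ JJ = - (\<Sum>i\<in>UNIV - {JJ}. q $ i)"
    using qsum sum.remove[of UNIV JJ "\<lambda>i. q $ i"] by simp
  have qJ: "q $ JJ < 0"
  proof (rule ccontr)
    assume "\<not> q $ JJ < 0"
    moreover have "(\<Sum>i\<in>UNIV - {JJ}. q $ i) \<ge> 0" using qnn by (intro sum_nonneg) auto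
    ultimately have s0: "(\<Sum>i\<in>UNIV - {JJ}. q $ i) = 0" "q $ JJ = 0" using sumrest by auto
    have "\<forall>i\<in>UNIV - {JJ}. q $ i = 0" using sum_nonneg_eq_0_iff[of "UNIV - {JJ}" "\<lambda>i. q $ i"] s0 qnn by auto
    hence "q = 0" using s0 by (auto simp: vec_eq_iff)
    thus False using ql by (simp add: q_def)
  qed
  define a where "a = - q $ JJ / fact l"
  have apos: "a > 0" unfolding a_def using qJ fl by (simp add: field_simps)
  have a2: "a / 2 > 0" using apos by simp
  obtain d where d0: "d > 0" and dall: "\<forall>x. 0 < x \<and> x < d \<longrightarrow> (\<forall>i j. \<bar>(C x *v e_vec j) $ i - (e_vec JJ $ i + (x ^ l / fact l) * q $ i)\<bar> \<le> (a / 2) * x ^ l)"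
    using tay[OF a2] by (elim exE conjE)
  have d: "d > 0" "\<And>x j. 0 < x \<and> x < d \<Longrightarrow> \<bar>(C x *v e_vec j) $ JJ - (e_vec JJ $ JJ + (x ^ l / fact l) * q $ JJ)\<bar> \<le> (a / 2) * x ^ l"
    using d0 dall by auto
  define k :: nat where "k = nat \<lceil>2 / a + 3 * a / 2 + 1 + 2 / d + 2 / e0\<rceil> + 1"
  have kge: "real k \<ge> 2 / a + 3 * a / 2 + 1 + 2 / d + 2 / e0" "k > 0" unfolding k_def by linarith+
  have kpos: "real k > 0" using kge by simp
  have nn: "2 / a \<ge> 0" "3 * a / 2 \<ge> 0" "2 / d \<ge> 0" "2 / e0 \<ge> 0" using apos d e0 by auto
  have k1: "1 / real k \<le> a / 2"
  proof -
    have "2 / a \<le> k" using kge nn by linarith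
    hence "2 \<le> k * a" using apos by (simp add: pos_divide_le_eq)
    thus ?thesis using kpos apos by (simp add: field_simps)
  qed
  have k2: "(3 * a / 2 + 1) / real k \<le> 1"
  proof -
    have "3 * a / 2 + 1 \<le> k" using kge nn by linarith
    thus ?thesis using kpos by simp
  qed
  have k3: "1 / real k < d"
  proof -
    have "2 / d \<le> k" using kge nn by linarith
    hence "2 \<le> k * d" using d by (simp add: pos_divide_le_eq)
    thus ?thesis using kpos d by (simp add: field_simps)
  qed
  have k4: "1 / real k \<le> e0"
  proof -
    have "2 / e0 \<le> k" using kge nn by linarith
    hence "2 \<le> k * e0" using e0 by (simp add: pos_divide_le_eq)
    thus ?thesis using kpos e0 by (simp add: field_simps)
  qed
  have k5: "1 / real k \<le> 1" using kge by simp
  show ?thesis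
  proof (intro exI[of _ k] conjI ballI allI)
    show "k > 0" "1 / real k \<le> e0" using kge k4 by auto
    fix \<epsilon> j j' assume eps: "\<epsilon> \<in> {0..1 / real k}"
    have epse0: "\<epsilon> \<in> {0..e0}" using eps k4 by auto
    define u where "u = C \<epsilon> *v e_vec j"
    define y where "y = C \<epsilon> *v e_vec j'"
    have us: "u \<in> simplex1" "y \<in> simplex1" unfolding u_def y_def
      using col_stochastic_simplex[OF Cst[OF epse0] e_vec_simplex] by auto
    have yJ: "0 \<le> y $ JJ" "y $ JJ \<le> 1"
    proof -
      show "0 \<le> y $ JJ" using us(2) unfolding simplex1_def by auto
      have "y $ JJ \<le> (\<Sum>i\<in>UNIV. y $ i)" using us(2) unfolding simplex1_def by (intro member_le_sum) auto
      thus "y $ JJ \<le> 1" using simplex_sum[OF us(2)] by simp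
    qed
    have bound: "1 - (\<Sum>i\<in>UNIV. u $ i * y $ i) \<ge> min (1 - y $ JJ) (y $ JJ)"
      using dot_simplex_bound[OF us, of JJ] by (simp add: min_def max_def split: if_splits)
    have epsl: "\<epsilon> ^ l \<le> 1 / real k"
    proof -
      have "\<epsilon> ^ l \<le> \<epsilon> ^ 1" using eps k5 l(1) by (intro power_decreasing) auto
      thus ?thesis using eps by simp
    qed
    have main: "1 - (\<Sum>i\<in>UNIV. u $ i * y $ i) \<ge> \<epsilon> ^ l / real k"
    proof (cases "\<epsilon> = 0")
      case True
      have "min (1 - y $ JJ) (y $ JJ) \<ge> 0" using yJ by simp
      moreover have "\<epsilon> ^ l / real k = 0" using True l(1) by simp
      ultimately show ?thesis using bound by linarith
    next
      case False
      hence e: "0 < \<epsilon>" "\<epsilon> < d" using eps k3 by auto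
      have est: "\<bar>y $ JJ - (1 - a * \<epsilon> ^ l)\<bar> \<le> (a / 2) * \<epsilon> ^ l"
        using d(2)[of \<epsilon> j'] e unfolding y_def a_def by (simp add: e_vec_def axis_def field_simps)
      have el: "\<epsilon> ^ l \<ge> 0" using e by simp
      have c1: "1 - y $ JJ \<ge> \<epsilon> ^ l / real k"
      proof -
        have "\<epsilon> ^ l * (1 / real k) \<le> \<epsilon> ^ l * (a / 2)" using k1 el by (intro mult_left_mono)
        hence "\<epsilon> ^ l / real k \<le> (a / 2) * \<epsilon> ^ l" by (simp add: mult.commute)
        thus ?thesis using est by linarith
      qed
      have c2: "y $ JJ \<ge> \<epsilon> ^ l / real k"
      proof -
        have "(3 * a / 2 + 1) * \<epsilon> ^ l \<le> (3 * a / 2 + 1) * (1 / real k)" using epsl apos by (intro mult_left_mono) auto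
        also have "\<dots> \<le> 1" using k2 by simp
        finally have "(3 * a / 2) * \<epsilon> ^ l + \<epsilon> ^ l \<le> 1" by (simp add: algebra_simps)
        moreover have "\<epsilon> ^ l / real k \<le> \<epsilon> ^ l"
        proof -
          have "\<epsilon> ^ l * (1 / real k) \<le> \<epsilon> ^ l * 1" using k5 el by (intro mult_left_mono)
          thus ?thesis by simp
        qed
        ultimately show ?thesis using est by linarith
      qed
      show ?thesis using bound c1 c2 by linarith
    qed
    thus "1 - (\<Sum>i\<in>UNIV. (chain A \<theta> \<theta>i Nm (Suc l) \<epsilon> \<omega> *v e_vec j) $ i * (chain A \<theta> \<theta>i Nm (Suc l) \<epsilon> \<omega> *v e_vec j') $ i)
       \<ge> \<epsilon> ^ l / real k" by (simp only: u_def y_def C_def)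
  qed
qed


lemma A_meas: "\<epsilon> \<ge> 0 \<Longrightarrow> (\<lambda>\<omega>. A \<epsilon> \<omega> $ a $ b) \<in> borel_measurable M"
  using MRN unfolding MRN_def by blast

lemma cocycle_meas: "\<epsilon> \<ge> 0 \<Longrightarrow> (\<lambda>\<omega>. cocycle (A \<epsilon>) \<theta> n \<omega> $ a $ b) \<in> borel_measurable M"
proof (induction n arbitrary: a b)
  case 0 thus ?case by (simp add: mat_def)
next
  case (Suc n)
  have "(\<lambda>\<omega>. A \<epsilon> ((\<theta> ^^ n) \<omega>) $ a $ c) \<in> borel_measurable M" for c
    using measurable_compose[OF measurable_funpow[OF th_meas] A_meas[OF Suc.prems]] by simp
  thus ?case using Suc by (simp add: matrix_matrix_mult_def)
qed

lemma pback_meas: "(\<lambda>\<omega>. pback \<theta>i Nm \<omega>) \<in> M \<rightarrow>\<^sub>M M"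
  unfolding pback_def
  by (rule measurable_compose_countable[OF measurable_funpow[OF thi_meas] Nm_meas])

lemma chain_meas: "\<epsilon> \<ge> 0 \<Longrightarrow> (\<lambda>\<omega>. chain A \<theta> \<theta>i Nm i \<epsilon> \<omega> $ a $ b) \<in> borel_measurable M"
proof (induction i arbitrary: a b)
  case 0 thus ?case by (simp add: mat_def)
next
  case (Suc i)
  have c1: "(\<lambda>\<omega>. cocycle (A \<epsilon>) \<theta> (Nm \<omega>) (pback \<theta>i Nm \<omega>) $ a $ c) \<in> borel_measurable M" for c
  proof (rule measurable_compose_countable[OF _ Nm_meas])
    fix n
    show "(\<lambda>\<omega>. cocycle (A \<epsilon>) \<theta> n (pback \<theta>i Nm \<omega>) $ a $ c) \<in> borel_measurable M"
      using measurable_compose[OF pback_meas cocycle_meas[OF Suc.prems]] by simp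
  qed
  have c2: "(\<lambda>\<omega>. chain A \<theta> \<theta>i Nm i \<epsilon> (pback \<theta>i Nm \<omega>) $ c $ b) \<in> borel_measurable M" for c
    using measurable_compose[OF pback_meas Suc.IH[OF Suc.prems]] by simp
  show ?case using c1 c2 by (simp add: matrix_matrix_mult_def)
qed

lemma tlen_meas: "(\<lambda>\<omega>. tlen \<theta>i Nm i \<omega>) \<in> M \<rightarrow>\<^sub>M count_space UNIV"
proof (induction i)
  case 0 thus ?case by simp
next
  case (Suc i)
  have "(\<lambda>\<omega>. tlen \<theta>i Nm i (pback \<theta>i Nm \<omega>)) \<in> M \<rightarrow>\<^sub>M count_space UNIV"
    using measurable_compose[OF pback_meas Suc.IH] by simp
  hence "(\<lambda>\<omega>. n + tlen \<theta>i Nm i (pback \<theta>i Nm \<omega>)) \<in> M \<rightarrow>\<^sub>M count_space UNIV" for n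
    by (rule measurable_compose) simp
  thus ?case using measurable_compose_countable[OF _ Nm_meas, of "\<lambda>n \<omega>. n + tlen \<theta>i Nm i (pback \<theta>i Nm \<omega>)"]
    by simp
qed

definition Gk :: "nat \<Rightarrow> nat \<Rightarrow> 'a set" where
  "Gk l k = {\<omega>\<in>space M. tlen \<theta>i Nm (Suc l) \<omega> \<le> k \<and>
     (\<forall>q::rat. 0 \<le> q \<and> of_rat q \<le> 1 / real k \<longrightarrow> (\<forall>j j'.
        1 - (\<Sum>i\<in>UNIV. (chain A \<theta> \<theta>i Nm (Suc l) (of_rat q) \<omega> *v e_vec j) $ i *
                         (chain A \<theta> \<theta>i Nm (Suc l) (of_rat q) \<omega> *v e_vec j') $ i)
        \<ge> of_rat q ^ l / real k))}"

lemma Gk_sets: "Gk l k \<in> sets M"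
proof -
  define R where "R q \<omega> \<longleftrightarrow> (\<forall>j j'.
        1 - (\<Sum>i\<in>UNIV. (chain A \<theta> \<theta>i Nm (Suc l) (of_rat q) \<omega> *v e_vec j) $ i *
                         (chain A \<theta> \<theta>i Nm (Suc l) (of_rat q) \<omega> *v e_vec j') $ i)
        \<ge> of_rat q ^ l / real k)" for q :: rat and \<omega>
  have p1: "Measurable.pred M (\<lambda>\<omega>. tlen \<theta>i Nm (Suc l) \<omega> \<le> k)"
    using measurable_compose[OF tlen_meas[of "Suc l"], of "\<lambda>x. x \<le> k" "count_space UNIV"] by simp
  have p2: "Measurable.pred M (\<lambda>\<omega>. 0 \<le> q \<and> of_rat q \<le> 1 / real k \<longrightarrow> R q \<omega>)" for q :: rat
  proof (cases "0 \<le> q \<and> of_rat q \<le> 1 / real k")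
    case True
    hence [measurable]: "(\<lambda>\<omega>. chain A \<theta> \<theta>i Nm (Suc l) (of_rat q) \<omega> $ a $ b) \<in> borel_measurable M" for a b
      by (intro chain_meas) auto
    define g where "g j j' \<omega> = 1 - (\<Sum>i\<in>UNIV. chain A \<theta> \<theta>i Nm (Suc l) (of_rat q) \<omega> $ i $ j *
                         chain A \<theta> \<theta>i Nm (Suc l) (of_rat q) \<omega> $ i $ j')" for j j' \<omega>
    have gm: "g j j' \<in> borel_measurable M" for j j' unfolding g_def[abs_def] by measurable
    have "Measurable.pred M (\<lambda>\<omega>. of_rat q ^ l / real k \<le> g j j' \<omega>)" for j j'
      using gm by measurable
    hence "Measurable.pred M (\<lambda>\<omega>. \<forall>j\<in>UNIV. \<forall>j'\<in>UNIV. of_rat q ^ l / real k \<le> g j j' \<omega>)"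
      by (intro pred_intros_finite) auto
    moreover have "R q \<omega> \<longleftrightarrow> (\<forall>j\<in>UNIV. \<forall>j'\<in>UNIV. of_rat q ^ l / real k \<le> g j j' \<omega>)" for \<omega>
      unfolding R_def g_def mv_e_vec_nth by simp
    ultimately show ?thesis using True by simp
  next
    case False
    have eq: "(\<lambda>\<omega>. 0 \<le> q \<and> of_rat q \<le> 1 / real k \<longrightarrow> R q \<omega>) = (\<lambda>\<omega>. True)"
      using False by blast
    show ?thesis unfolding eq by simp
  qed
  have "Measurable.pred M (\<lambda>\<omega>. tlen \<theta>i Nm (Suc l) \<omega> \<le> k \<and> (\<forall>q::rat. 0 \<le> q \<and> of_rat q \<le> 1 / real k \<longrightarrow> R q \<omega>))"
    by (rule pred_intros_logic(3)[OF p1 pred_intros_countable(1)[OF p2]])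
  hence "{\<omega>\<in>space M. tlen \<theta>i Nm (Suc l) \<omega> \<le> k \<and> (\<forall>q::rat. 0 \<le> q \<and> of_rat q \<le> 1 / real k \<longrightarrow> R q \<omega>)} \<in> sets M"
    by (simp only: pred_def)
  moreover have "Gk l k = {\<omega>\<in>space M. tlen \<theta>i Nm (Suc l) \<omega> \<le> k \<and> (\<forall>q::rat. 0 \<le> q \<and> of_rat q \<le> 1 / real k \<longrightarrow> R q \<omega>)}"
    unfolding Gk_def R_def by (rule refl)
  ultimately show ?thesis by simp
qed


lemma Gk_mono:
  assumes k: "0 < k" "k \<le> k'"
  shows "Gk l k \<subseteq> Gk l k'"
proof
  fix \<omega> assume w: "\<omega> \<in> Gk l k"
  define R where "R q = (\<forall>j j'.
        1 - (\<Sum>i\<in>UNIV. (chain A \<theta> \<theta>i Nm (Suc l) (of_rat q) \<omega> *v e_vec j) $ i *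
                         (chain A \<theta> \<theta>i Nm (Suc l) (of_rat q) \<omega> *v e_vec j') $ i)
        \<ge> of_rat q ^ l / real k')" for q :: rat
  define R0 where "R0 q = (\<forall>j j'.
        1 - (\<Sum>i\<in>UNIV. (chain A \<theta> \<theta>i Nm (Suc l) (of_rat q) \<omega> *v e_vec j) $ i *
                         (chain A \<theta> \<theta>i Nm (Suc l) (of_rat q) \<omega> *v e_vec j') $ i)
        \<ge> of_rat q ^ l / real k)" for q :: rat
  have w': "\<omega> \<in> space M" "tlen \<theta>i Nm (Suc l) \<omega> \<le> k" "\<And>q. 0 \<le> q \<and> of_rat q \<le> 1 / real k \<Longrightarrow> R0 q"
    using w unfolding Gk_def R0_def mem_Collect_eq by blast+
  have kk: "1 / real k' \<le> 1 / real k" using k by (simp add: frac_le)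
  have "R q" if q: "0 \<le> q \<and> of_rat q \<le> 1 / real k'" for q
  proof -
    have "R0 q" using w'(3) q kk by auto
    moreover have "of_rat q ^ l / real k' \<le> of_rat q ^ l / real k"
      using q k by (intro divide_left_mono) auto
    ultimately show ?thesis unfolding R0_def R_def by (meson order_trans)
  qed
  moreover have "tlen \<theta>i Nm (Suc l) \<omega> \<le> k'" using w'(2) k by simp
  ultimately show "\<omega> \<in> Gk l k'" using w'(1) unfolding Gk_def R_def mem_Collect_eq by blast
qed

lemma main_locale:
  assumes l: "1 \<le> l" "l \<le> m"
    and pos: "measure M (Omega_l M A \<theta> \<theta>i J Nm (l - 1) - Omega_l M A \<theta> \<theta>i J Nm l) > 0"
    and \<delta>: "0 < \<delta>" "\<delta> < measure M (Omega_l M A \<theta> \<theta>i J Nm (l - 1) - Omega_l M A \<theta> \<theta>i J Nm l)"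
  shows "\<exists>\<epsilon>\<delta>>0. \<exists>c\<delta>>0. \<exists>F :: 'a \<Rightarrow> nat set. AE \<omega> in M.
           liminf (\<lambda>n. ereal (real (card (F \<omega> \<inter> {1..n})) / real n))
             > ereal (measure M (Omega_l M A \<theta> \<theta>i J Nm (l - 1) - Omega_l M A \<theta> \<theta>i J Nm l) - \<delta>)
         \<and> (\<forall>\<epsilon>. 0 \<le> \<epsilon> \<and> \<epsilon> < \<epsilon>\<delta> \<longrightarrow>
              (\<forall>u\<in>simplex1. \<forall>v\<in>simplex1. \<forall>n\<in>F \<omega>.
                 1 - (\<Sum>i\<in>UNIV. (cocycle (A \<epsilon>) \<theta> n \<omega> *v u) $ i * (cocycle (A \<epsilon>) \<theta> n \<omega> *v v) $ i)
                   \<ge> \<epsilon> ^ l * c\<delta>))"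
proof -
  interpret P: prob_space M by (rule prob)
  define D where "D = Omega_l M A \<theta> \<theta>i J Nm (l - 1) - Omega_l M A \<theta> \<theta>i J Nm l"
  have Dm: "D \<in> sets M" using pos measure_notin_sets unfolding D_def by force
  obtain N where N: "{\<omega>\<in>space M. \<not> good \<omega>} \<subseteq> N" "N \<in> null_sets M"
    using AE_E[OF AE_good] by (metis null_setsI)
  define H where "H k = Gk l (Suc k) \<inter> (space M - N)" for k
  have Hm: "H k \<in> sets M" for k using Gk_sets N(2) unfolding H_def by auto
  have Hinc: "incseq H"
    unfolding incseq_def H_def using Gk_mono by (meson Int_mono Suc_le_mono order_refl zero_less_Suc)
  have cover: "D - N \<subseteq> (\<Union>k. H k)"
  proof
    fix \<omega> assume w: "\<omega> \<in> D - N"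
    have sp: "\<omega> \<in> space M" using w unfolding D_def Omega_l_def by blast
    have g: "good \<omega>" using w N(1) sp by blast
    have q0: "\<forall>s\<in>{1..l-1}. qvec A \<theta> \<theta>i J Nm s \<omega> = 0" using w unfolding D_def Omega_l_def by blast
    have ql: "qvec A \<theta> \<theta>i J Nm l \<omega> \<noteq> 0"
    proof
      assume ql0: "qvec A \<theta> \<theta>i J Nm l \<omega> = 0"
      have "\<forall>s\<in>{1..l}. qvec A \<theta> \<theta>i J Nm s \<omega> = 0"
      proof
        fix s assume s: "s \<in> {1..l}"
        show "qvec A \<theta> \<theta>i J Nm s \<omega> = 0"
        proof (cases "s = l")
          case True thus ?thesis using ql0 by simp
        next
          case False
          hence "s \<in> {1..l-1}" using s by auto
          thus ?thesis using q0 by blast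
        qed
      qed
      hence "\<omega> \<in> Omega_l M A \<theta> \<theta>i J Nm l" using sp unfolding Omega_l_def by blast
      thus False using w unfolding D_def by blast
    qed
    obtain k0 :: nat where k0: "k0 > 0" "1 / real k0 \<le> e0"
      "\<forall>\<epsilon>\<in>{0..1 / real k0}. \<forall>j j'.
       1 - (\<Sum>i\<in>UNIV. (chain A \<theta> \<theta>i Nm (Suc l) \<epsilon> \<omega> *v e_vec j) $ i * (chain A \<theta> \<theta>i Nm (Suc l) \<epsilon> \<omega> *v e_vec j') $ i)
         \<ge> \<epsilon> ^ l / real k0"
      using analytic[OF g l q0 ql] by blast
    define k' where "k' = max k0 (tlen \<theta>i Nm (Suc l) \<omega>)"
    have k'pos: "k' > 0" "k0 \<le> k'" unfolding k'_def using k0 by auto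
    define X where "X \<epsilon> j j' = 1 - (\<Sum>i\<in>UNIV. (chain A \<theta> \<theta>i Nm (Suc l) \<epsilon> \<omega> *v e_vec j) $ i *
       (chain A \<theta> \<theta>i Nm (Suc l) \<epsilon> \<omega> *v e_vec j') $ i)" for \<epsilon> j j'
    have k0X: "\<And>\<epsilon> j j'. \<epsilon> \<in> {0..1 / real k0} \<Longrightarrow> X \<epsilon> j j' \<ge> \<epsilon> ^ l / real k0"
      using k0(3) unfolding X_def by blast
    have kk: "1 / real k' \<le> 1 / real k0" using k'pos k0 by (simp add: frac_le)
    have qq: "\<forall>q::rat. 0 \<le> q \<and> of_rat q \<le> 1 / real k' \<longrightarrow> (\<forall>j j'. X (of_rat q) j j' \<ge> of_rat q ^ l / real k')"
    proof (intro allI impI)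
      fix q :: rat and j j' assume q: "0 \<le> q \<and> of_rat q \<le> 1 / real k'"
      have "X (of_rat q) j j' \<ge> of_rat q ^ l / real k0" using k0X[of "of_rat q" j j'] q kk by auto
      moreover have "of_rat q ^ l / real k' \<le> of_rat q ^ l / real k0"
        using q k'pos k0 by (intro divide_left_mono) auto
      ultimately show "X (of_rat q) j j' \<ge> of_rat q ^ l / real k'" by linarith
    qed
    have tl: "tlen \<theta>i Nm (Suc l) \<omega> \<le> k'" unfolding k'_def by simp
    have "\<omega> \<in> Gk l k'" using sp tl qq[unfolded X_def] unfolding Gk_def mem_Collect_eq by blast
    moreover have "Suc (k' - 1) = k'" using k'pos by simp
    ultimately have "\<omega> \<in> H (k' - 1)" unfolding H_def using w sp by auto
    thus "\<omega> \<in> (\<Union>k. H k)" by blast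
  qed
  have mDN: "measure M (D - N) = measure M D" using N(2) Dm by (simp add: measure_Diff_null_set)
  have Um: "(\<Union>k. H k) \<in> sets M" using Hm by auto
  have lim: "(\<lambda>k. measure M (H k)) \<longlonglongrightarrow> measure M (\<Union>k. H k)"
    using P.finite_Lim_measure_incseq[of H] Hm Hinc by auto
  have "measure M (D - N) \<le> measure M (\<Union>k. H k)"
    using cover Um Dm N(2) by (intro P.finite_measure_mono) auto
  hence "measure M D - \<delta> < measure M (\<Union>k. H k)" using mDN \<delta> unfolding D_def by simp
  hence "eventually (\<lambda>k. measure M D - \<delta> < measure M (H k)) sequentially"
    using order_tendstoD(1)[OF lim] by blast
  then obtain K where K: "measure M D - \<delta> < measure M (H K)" by (auto simp: eventually_sequentially)
  define G where "G = H K"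
  define kk where "kk = Suc K"
  have Gm: "G \<in> sets M" unfolding G_def by (rule Hm)
  have GGk: "G \<subseteq> Gk l kk" unfolding G_def H_def kk_def by auto
  have Gmu: "measure M D - \<delta> < measure M G" using K unfolding G_def .
  define r where "r = (measure M D - \<delta> + measure M G) / 2"
  have r: "measure M D - \<delta> < r" "r < measure M G" using Gmu unfolding r_def by auto
  have freq: "AE \<omega> in M. \<exists>N0. \<forall>n\<ge>N0. r * n \<le> Scount \<theta> G n \<omega>"
    by (rule freq_lower[OF prob th_meas distr_th erg Gm r(2)])
  define e1 where "e1 = min (1 / real kk) e0"
  have e1: "e1 > 0" "e1 \<le> e0" "e1 \<le> 1 / real kk" unfolding e1_def kk_def using e0 by auto
  have kkpos: "real kk > 0" "kk \<ge> 1" unfolding kk_def by auto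
  define F where "F \<omega> = {n. kk \<le> n \<and> (\<theta> ^^ n) \<omega> \<in> G}" for \<omega>
  have AEpart: "AE \<omega> in M.
           liminf (\<lambda>n. ereal (real (card (F \<omega> \<inter> {1..n})) / real n))
             > ereal (measure M (Omega_l M A \<theta> \<theta>i J Nm (l - 1) - Omega_l M A \<theta> \<theta>i J Nm l) - \<delta>)
         \<and> (\<forall>\<epsilon>. 0 \<le> \<epsilon> \<and> \<epsilon> < e1 \<longrightarrow>
              (\<forall>u\<in>simplex1. \<forall>v\<in>simplex1. \<forall>n\<in>F \<omega>.
                 1 - (\<Sum>i\<in>UNIV. (cocycle (A \<epsilon>) \<theta> n \<omega> *v u) $ i * (cocycle (A \<epsilon>) \<theta> n \<omega> *v v) $ i)
                   \<ge> \<epsilon> ^ l * (1 / real kk)))"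
      using freq AE_good
    proof eventually_elim
      fix \<omega> assume fr: "\<exists>N0. \<forall>n\<ge>N0. r * n \<le> Scount \<theta> G n \<omega>" and g: "good \<omega>"
      have sp: "\<omega> \<in> space M" using good_space[OF g] .
      obtain N0 where N0: "\<And>n. n \<ge> N0 \<Longrightarrow> r * n \<le> Scount \<theta> G n \<omega>" using fr by blast
      define r' where "r' = (measure M D - \<delta> + r) / 2"
      have r': "measure M D - \<delta> < r'" "r' < r" using r unfolding r'_def by auto
      define N1 where "N1 = max (max N0 1) (nat \<lceil>kk / (r - r')\<rceil>)"
      have ev: "eventually (\<lambda>n. ereal r' \<le> ereal (real (card (F \<omega> \<inter> {1..n})) / real n)) sequentially"
        unfolding eventually_sequentially
      proof (intro exI[of _ N1] allI impI)
        fix n assume n: "N1 \<le> n"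
        have n1: "n \<ge> 1" "n \<ge> N0" using n unfolding N1_def by auto
        have "kk / (r - r') \<le> n" using n unfolding N1_def by linarith
        hence nk: "kk \<le> (r - r') * n" using r' by (simp add: pos_divide_le_eq mult.commute)
        have "Scount \<theta> G n \<omega> \<le> real (card (F \<omega> \<inter> {1..n})) + kk"
          using card_F[OF kkpos(2), of n "\<lambda>j. (\<theta> ^^ j) \<omega> \<in> G"] unfolding Scount_card F_def .
        hence "r' * n \<le> real (card (F \<omega> \<inter> {1..n}))" using N0[OF n1(2)] nk by (simp add: algebra_simps)
        hence "r' \<le> real (card (F \<omega> \<inter> {1..n})) / real n" using n1 by (simp add: pos_le_divide_eq)
        thus "ereal r' \<le> ereal (real (card (F \<omega> \<inter> {1..n})) / real n)" by simp
      qed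
      have "ereal r' \<le> liminf (\<lambda>n. ereal (real (card (F \<omega> \<inter> {1..n})) / real n))"
        by (rule Liminf_bounded[OF ev])
      hence part1: "liminf (\<lambda>n. ereal (real (card (F \<omega> \<inter> {1..n})) / real n))
             > ereal (measure M (Omega_l M A \<theta> \<theta>i J Nm (l - 1) - Omega_l M A \<theta> \<theta>i J Nm l) - \<delta>)"
      proof -
        have "ereal (measure M (Omega_l M A \<theta> \<theta>i J Nm (l - 1) - Omega_l M A \<theta> \<theta>i J Nm l) - \<delta>) < ereal r'"
          using r'(1) unfolding D_def by simp
        thus ?thesis using \<open>ereal r' \<le> _\<close> by (rule order_less_le_trans)
      qed
      have part2: "1 - (\<Sum>i\<in>UNIV. (cocycle (A \<epsilon>) \<theta> n \<omega> *v u) $ i * (cocycle (A \<epsilon>) \<theta> n \<omega> *v v) $ i)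
                   \<ge> \<epsilon> ^ l * (1 / real kk)"
        if eps: "0 \<le> \<epsilon>" "\<epsilon> < e1" and uv: "u \<in> simplex1" "v \<in> simplex1" and n: "n \<in> F \<omega>" for \<epsilon> u v n
      proof -
        define y where "y = (\<theta> ^^ n) \<omega>"
        have yG: "y \<in> Gk l kk" using n GGk unfolding F_def y_def by auto
        have gy: "good y" unfolding y_def using good_th_pow[OF g] .
        have tl: "tlen \<theta>i Nm (Suc l) y \<le> n" using yG n unfolding Gk_def F_def by auto
        have epse0: "\<epsilon> \<in> {0..e0}" using eps e1 by auto
        define C where "C \<epsilon>' = chain A \<theta> \<theta>i Nm (Suc l) \<epsilon>' y" for \<epsilon>'
        define W where "W = cocycle (A \<epsilon>) \<theta> (n - tlen \<theta>i Nm (Suc l) y) \<omega>"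
        have dec: "cocycle (A \<epsilon>) \<theta> n \<omega> = C \<epsilon> ** W"
          using chain_decomp[of "space M" \<theta>i \<theta> \<omega> Nm "Suc l" n A \<epsilon>, OF inv1 th_sp sp] tl
          unfolding C_def W_def y_def by simp
        have Wst: "col_stochastic W" unfolding W_def using cocycle_stoch[OF g epse0] .
        have ws: "W *v u \<in> simplex1" "W *v v \<in> simplex1" using col_stochastic_simplex[OF Wst] uv by auto
        define X where "X \<epsilon>' j j' = 1 - (\<Sum>i\<in>UNIV. C \<epsilon>' $ i $ j * C \<epsilon>' $ i $ j') - \<epsilon>' ^ l / real kk" for \<epsilon>' j j'
        have Xc: "continuous_on {0..e1} (\<lambda>\<epsilon>'. X \<epsilon>' j j')" for j j'
        proof -
          have "continuous_on {0..e0} C" unfolding C_def using Cm_on_cont[OF chain_Cm[OF gy]] .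
          hence "continuous_on {0..e1} C" by (rule continuous_on_subset) (use e1 in auto)
          thus ?thesis unfolding X_def using kkpos by (intro continuous_intros) auto
        qed
        have Xq: "X \<epsilon>' j j' \<ge> 0" if "\<epsilon>' \<in> {0..e1} \<inter> \<rat>" for \<epsilon>' j j'
        proof -
          from that obtain q where q: "\<epsilon>' = of_rat q" by (auto elim: Rats_cases)
          hence q0: "0 \<le> q \<and> of_rat q \<le> 1 / real kk" using that e1 by auto
          have "1 - (\<Sum>i\<in>UNIV. (chain A \<theta> \<theta>i Nm (Suc l) (of_rat q) y *v e_vec j) $ i *
                         (chain A \<theta> \<theta>i Nm (Suc l) (of_rat q) y *v e_vec j') $ i)
              \<ge> of_rat q ^ l / real kk"
            using yG q0 unfolding Gk_def mem_Collect_eq by blast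
          thus ?thesis unfolding X_def C_def q mv_e_vec_nth by simp
        qed
        have Xe: "X \<epsilon> j j' \<ge> 0" for j j'
          using continuous_ge_on_closure[where S="{0..e1} \<inter> \<rat>" and f="\<lambda>\<epsilon>'. X \<epsilon>' j j'" and a=0]
            Xc Xq closure_rat_Icc[OF e1(1)] eps by auto
        have basis: "1 - (\<Sum>i\<in>UNIV. (C \<epsilon> *v e_vec j) $ i * (C \<epsilon> *v e_vec j') $ i) \<ge> \<epsilon> ^ l / real kk" for j j'
          using Xe[of j j'] unfolding X_def mv_e_vec_nth by simp
        have "1 - (\<Sum>i\<in>UNIV. (C \<epsilon> *v (W *v u)) $ i * (C \<epsilon> *v (W *v v)) $ i) \<ge> \<epsilon> ^ l / real kk"
          by (rule bilin_bound[OF ws basis])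
        thus ?thesis unfolding dec by (simp add: matrix_vector_mul_assoc)
      qed
      show "liminf (\<lambda>n. ereal (real (card (F \<omega> \<inter> {1..n})) / real n))
             > ereal (measure M (Omega_l M A \<theta> \<theta>i J Nm (l - 1) - Omega_l M A \<theta> \<theta>i J Nm l) - \<delta>)
         \<and> (\<forall>\<epsilon>. 0 \<le> \<epsilon> \<and> \<epsilon> < e1 \<longrightarrow>
              (\<forall>u\<in>simplex1. \<forall>v\<in>simplex1. \<forall>n\<in>F \<omega>.
                 1 - (\<Sum>i\<in>UNIV. (cocycle (A \<epsilon>) \<theta> n \<omega> *v u) $ i * (cocycle (A \<epsilon>) \<theta> n \<omega> *v v) $ i)
                   \<ge> \<epsilon> ^ l * (1 / real kk)))"
        using part1 part2 by blast
    qed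
  show ?thesis
    apply (rule exI[of _ e1], rule conjI, rule e1(1))
    apply (rule exI[of _ "1 / real kk"], rule conjI, simp add: kk_def)
    apply (rule exI[of _ F])
    apply (rule AEpart)
    done
qed

end

theorem lemma5p2:
  fixes M :: "'a measure" and \<theta> \<theta>i :: "'a \<Rightarrow> 'a"
    and A :: "real \<Rightarrow> 'a \<Rightarrow> real ^'k::finite ^'k"
    and J :: "'a \<Rightarrow> 'k" and Nm :: "'a \<Rightarrow> nat"
    and m l :: nat and \<delta> :: real
  assumes card_k: "CARD('k) \<ge> 2"
    and mds: "invertible_mds M \<theta> \<theta>i"
    and sync: "synchronized M \<theta> (A 0)"
    and J_meas: "J \<in> M \<rightarrow>\<^sub>M count_space UNIV"
    and Nm_meas: "Nm \<in> M \<rightarrow>\<^sub>M count_space UNIV"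
    and J_prop: "AE \<omega> in M. \<forall>n. cocycle (A 0) \<theta> n \<omega> *v e_vec (J \<omega>) = e_vec (J ((\<theta> ^^ n) \<omega>))"
    and Nm_prop: "AE \<omega> in M. \<forall>n j. n \<ge> Nm \<omega> \<longrightarrow>
                     cocycle (A 0) \<theta> n ((\<theta>i ^^ n) \<omega>) *v e_vec j = e_vec (J \<omega>)"
    and pert: "Cm_markov_perturbation m M A"
    and m_pos: "m \<ge> 1"
    and l_range: "1 \<le> l" "l \<le> m"
    and pos: "measure M (Omega_l M A \<theta> \<theta>i J Nm (l - 1) - Omega_l M A \<theta> \<theta>i J Nm l) > 0"
    and \<delta>_range: "0 < \<delta>" "\<delta> < measure M (Omega_l M A \<theta> \<theta>i J Nm (l - 1) - Omega_l M A \<theta> \<theta>i J Nm l)"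
  shows "\<exists>\<epsilon>\<delta>>0. \<exists>c\<delta>>0. \<exists>F :: 'a \<Rightarrow> nat set. AE \<omega> in M.
           liminf (\<lambda>n. ereal (real (card (F \<omega> \<inter> {1..n})) / real n))
             > ereal (measure M (Omega_l M A \<theta> \<theta>i J Nm (l - 1) - Omega_l M A \<theta> \<theta>i J Nm l) - \<delta>)
         \<and> (\<forall>\<epsilon>. 0 \<le> \<epsilon> \<and> \<epsilon> < \<epsilon>\<delta> \<longrightarrow>
              (\<forall>u\<in>simplex1. \<forall>v\<in>simplex1. \<forall>n\<in>F \<omega>.
                 1 - (\<Sum>i\<in>UNIV. (cocycle (A \<epsilon>) \<theta> n \<omega> *v u) $ i * (cocycle (A \<epsilon>) \<theta> n \<omega> *v v) $ i)
                   \<ge> \<epsilon> ^ l * c\<delta>))"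
proof -
  obtain e0 where e0: "e0 > 0" "AE \<omega> in M. Cm_on m (\<lambda>\<epsilon>. A \<epsilon> \<omega>) {0..e0}"
    using pert unfolding Cm_markov_perturbation_def by blast
  have mrn: "\<And>\<epsilon>. \<epsilon> \<ge> 0 \<Longrightarrow> MRN M (A \<epsilon>)"
    using pert unfolding Cm_markov_perturbation_def markov_perturbation_def by blast
  interpret lsetup M \<theta> \<theta>i A J Nm m e0
    by (unfold_locales) (use mds Nm_prop mrn e0 Nm_meas m_pos in auto)
  show ?thesis by (rule main_locale[OF l_range pos \<delta>_range])
qed

end
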